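(* Let $\mathcal{Q}$ be a small involutive quantaloid and $\mathbb{A}$ a $\mathcal{Q}$-category. The following are equivalent: (1) the functor $L_{\mathbb{A}}\colon(\mathbb{A}_{\mathsf s})_{\mathsf{sc}}\to(\mathbb{A}_{\mathsf{cc}})_{\mathsf s}$, $\phi\mapsto\mathbb{A}(-,S_{\mathbb{A}}-)\otimes\phi$, is surjective on objects; (2) for every $X\in\mathcal{Q}_0$ and every left adjoint presheaf $\psi\colon *_X\to\mathbb{A}$, the presheaf $\psi_{\mathsf s}\colon *_X\to\mathbb{A}_{\mathsf s}$ is a symmetric left adjoint; (3) for every $\mathcal{Q}$-category $\mathbb{X}$ and every left adjoint distributor $\Psi\colon\mathbb{X}\to\mathbb{A}$, the distributor $\Psi_{\mathsf s}\colon\mathbb{X}_{\mathsf s}\to\mathbb{A}_{\mathsf s}$ is a symmetric left adjoint. Moreover, when (1) holds, $L_{\mathbb{A}}$ is an isomorphism with inverse $\psi\mapsto\psi_{\mathsf s}$.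
   Context: A quantaloid is a category enriched in $\mathsf{Sup}$; an involution is an identity-on-objects, direction-reversing, monotone map $f\mapsto f^{\mathsf o}$ on morphisms with $(g\circ f)^{\mathsf o}=f^{\mathsf o}\circ g^{\mathsf o}$, $f^{\mathsf{oo}}=f$. A $\mathcal{Q}$-category $\mathbb{A}$: objects with types $tx\in\mathcal{Q}_0$, homs $\mathbb{A}(y,x)\colon tx\to ty$ with $\mathbb{A}(z,y)\circ\mathbb{A}(y,x)\le\mathbb{A}(z,x)$, $1_{tx}\le\mathbb{A}(x,x)$; symmetric if $\mathbb{A}(x,y)=\mathbb{A}(y,x)^{\mathsf o}$. Symmetrisation $\mathbb{A}_{\mathsf s}$: same objects, $\mathbb{A}_{\mathsf s}(y,x)=\mathbb{A}(y,x)\wedge\mathbb{A}(x,y)^{\mathsf o}$; $S_{\mathbb{A}}\colon\mathbb{A}_{\mathsf s}\to\mathbb{A}$ is the identity on objects. Distributors $\Phi\colon\mathbb{A}\to\mathbb{B}$: arrows $\Phi(y,x)\colon tx\to ty$ with $\mathbb{B}(y',y)\circ\Phi(y,x)\le\Phi(y',x)$, $\Phi(y,x)\circ\mathbb{A}(x,x')\le\Phi(y,x')$; composition $(\Psi\otimes\Phi)(z,x)=\bigvee_y\Psi(z,y)\circ\Phi(y,x)$; left adjoint with right adjoint $\Phi^*$ if $\mathbb{A}\le\Phi^*\otimes\Phi$, $\Phi\otimes\Phi^*\le\mathbb{B}$. $\mathbb{A}(-,S_{\mathbb{A}}-)\colon\mathbb{A}_{\mathsf s}\to\mathbb{A}$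 has elements $\mathbb{A}(y,x)$. For distributors between symmetric categories, $\Phi^{\mathsf o}(x,y)=\Phi(y,x)^{\mathsf o}$, and $\Phi$ is a symmetric left adjoint if left adjoint to $\Phi^{\mathsf o}$. For a left adjoint $\Psi\colon\mathbb{X}\to\mathbb{A}$, $\Psi_{\mathsf s}\colon\mathbb{X}_{\mathsf s}\to\mathbb{A}_{\mathsf s}$ is the distributor $\Psi_{\mathsf s}(a,x)=\Psi(a,x)\wedge\Psi^*(x,a)^{\mathsf o}$ (equivalently $(\mathbb{A}(S_{\mathbb{A}}-,-)\otimes\Psi\otimes\mathbb{X}(-,S_{\mathbb{X}}-))\wedge(\mathbb{X}(S_{\mathbb{X}}-,-)\otimes\Psi^*\otimes\mathbb{A}(-,S_{\mathbb{A}}-))^{\mathsf o}$). $*_X$: one object of type $X$, hom $1_X$ (symmetric, with $( *_X)_{\mathsf s}=*_X$); a presheaf is a distributor $*_X\to\mathbb{A}$. Cauchy completion $\mathbb{A}_{\mathsf{cc}}$: objects the left adjoint presheaves $\phi\colon*_X\to\mathbb{A}$ (type $X$), hom $\mathbb{A}_{\mathsf{cc}}(\psi,\phi)$ the unique element of $\psi^*\otimes\phi$. For symmetric $\mathbb{B}$, $\mathbb{B}_{\mathsf{sc}}$ is the full subcategory of $\mathbb{B}_{\mathsf{cc}}$ on symmetric left adjoint presheaves. *)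

theory Defs
  imports Main
begin

text \<open>A small quantaloid: a set of objects, hom-sets, composition (qcomp g f = g o f),
  identities, a partial order on each hom-set with arbitrary joins (qsup X Y S is the
  join in the hom-set from X to Y of S), composition preserving joins in each variable,
  and an involution qinv.\<close>

record ('o, 'm) quantaloid =
  qobj  :: "'o set"
  qhom  :: "'o \<Rightarrow> 'o \<Rightarrow> 'm set"
  qcomp :: "'m \<Rightarrow> 'm \<Rightarrow> 'm"
  qid   :: "'o \<Rightarrow> 'm"
  qle   :: "'m \<Rightarrow> 'm \<Rightarrow> bool"
  qsup  :: "'o \<Rightarrow> 'o \<Rightarrow> 'm set \<Rightarrow> 'm"
  qinv  :: "'m \<Rightarrow> 'm"

definition quantaloid :: "('o, 'm) quantaloid \<Rightarrow> bool" where
  "quantaloid Q \<longleftrightarrow>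
     (\<forall>X\<in>qobj Q. qid Q X \<in> qhom Q X X) \<and>
     (\<forall>X\<in>qobj Q. \<forall>Y\<in>qobj Q. \<forall>Z\<in>qobj Q. \<forall>f\<in>qhom Q X Y. \<forall>g\<in>qhom Q Y Z.
        qcomp Q g f \<in> qhom Q X Z) \<and>
     (\<forall>X\<in>qobj Q. \<forall>Y\<in>qobj Q. \<forall>Z\<in>qobj Q. \<forall>W\<in>qobj Q.
        \<forall>f\<in>qhom Q X Y. \<forall>g\<in>qhom Q Y Z. \<forall>h\<in>qhom Q Z W.
        qcomp Q h (qcomp Q g f) = qcomp Q (qcomp Q h g) f) \<and>
     (\<forall>X\<in>qobj Q. \<forall>Y\<in>qobj Q. \<forall>f\<in>qhom Q X Y.
        qcomp Q (qid Q Y) f = f \<and> qcomp Q f (qid Q X) = f) \<and>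
     (\<forall>X\<in>qobj Q. \<forall>Y\<in>qobj Q.
        (\<forall>f\<in>qhom Q X Y. qle Q f f) \<and>
        (\<forall>f\<in>qhom Q X Y. \<forall>g\<in>qhom Q X Y. \<forall>h\<in>qhom Q X Y.
            qle Q f g \<longrightarrow> qle Q g h \<longrightarrow> qle Q f h) \<and>
        (\<forall>f\<in>qhom Q X Y. \<forall>g\<in>qhom Q X Y. qle Q f g \<longrightarrow> qle Q g f \<longrightarrow> f = g) \<and>
        (\<forall>S. S \<subseteq> qhom Q X Y \<longrightarrow>
            qsup Q X Y S \<in> qhom Q X Y \<and>
            (\<forall>s\<in>S. qle Q s (qsup Q X Y S)) \<and>
            (\<forall>u\<in>qhom Q X Y. (\<forall>s\<in>S. qle Q s u) \<longrightarrow> qle Q (qsup Q X Y S) u))) \<and>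
     (\<forall>X\<in>qobj Q. \<forall>Y\<in>qobj Q. \<forall>Z\<in>qobj Q. \<forall>f\<in>qhom Q X Y. \<forall>S.
        S \<subseteq> qhom Q Y Z \<longrightarrow>
        qcomp Q (qsup Q Y Z S) f = qsup Q X Z ((\<lambda>g. qcomp Q g f) ` S)) \<and>
     (\<forall>X\<in>qobj Q. \<forall>Y\<in>qobj Q. \<forall>Z\<in>qobj Q. \<forall>g\<in>qhom Q Y Z. \<forall>S.
        S \<subseteq> qhom Q X Y \<longrightarrow>
        qcomp Q g (qsup Q X Y S) = qsup Q X Z (qcomp Q g ` S))"

definition involutive_quantaloid :: "('o, 'm) quantaloid \<Rightarrow> bool" where
  "involutive_quantaloid Q \<longleftrightarrow> quantaloid Q \<and>
     (\<forall>X\<in>qobj Q. \<forall>Y\<in>qobj Q. \<forall>f\<in>qhom Q X Y.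
        qinv Q f \<in> qhom Q Y X \<and> qinv Q (qinv Q f) = f) \<and>
     (\<forall>X\<in>qobj Q. \<forall>Y\<in>qobj Q. \<forall>f\<in>qhom Q X Y. \<forall>g\<in>qhom Q X Y.
        qle Q f g \<longrightarrow> qle Q (qinv Q f) (qinv Q g)) \<and>
     (\<forall>X\<in>qobj Q. \<forall>Y\<in>qobj Q. \<forall>Z\<in>qobj Q. \<forall>f\<in>qhom Q X Y. \<forall>g\<in>qhom Q Y Z.
        qinv Q (qcomp Q g f) = qcomp Q (qinv Q f) (qinv Q g))"

definition qmeet :: "('o, 'm) quantaloid \<Rightarrow> 'o \<Rightarrow> 'o \<Rightarrow> 'm \<Rightarrow> 'm \<Rightarrow> 'm" where
  "qmeet Q X Y f g = qsup Q X Y {h \<in> qhom Q X Y. qle Q h f \<and> qle Q h g}"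

text \<open>chom A y x is the hom A(y,x) : t x --> t y.\<close>
record ('a, 'o, 'm) qcat =
  cob  :: "'a set"
  cty  :: "'a \<Rightarrow> 'o"
  chom :: "'a \<Rightarrow> 'a \<Rightarrow> 'm"

definition qcategory :: "('o, 'm) quantaloid \<Rightarrow> ('a, 'o, 'm) qcat \<Rightarrow> bool" where
  "qcategory Q A \<longleftrightarrow>
     (\<forall>x\<in>cob A. cty A x \<in> qobj Q) \<and>
     (\<forall>x\<in>cob A. \<forall>y\<in>cob A. chom A y x \<in> qhom Q (cty A x) (cty A y)) \<and>
     (\<forall>x\<in>cob A. \<forall>y\<in>cob A. \<forall>z\<in>cob A.
        qle Q (qcomp Q (chom A z y) (chom A y x)) (chom A z x)) \<and>
     (\<forall>x\<in>cob A. qle Q (qid Q (cty A x)) (chom A x x))"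

definition symz :: "('o, 'm) quantaloid \<Rightarrow> ('a, 'o, 'm) qcat \<Rightarrow> ('a, 'o, 'm) qcat" where
  "symz Q A = \<lparr> cob = cob A, cty = cty A,
     chom = (\<lambda>y x. if x \<in> cob A \<and> y \<in> cob A
                   then qmeet Q (cty A x) (cty A y) (chom A y x) (qinv Q (chom A x y))
                   else undefined) \<rparr>"

definition star :: "('o, 'm) quantaloid \<Rightarrow> 'o \<Rightarrow> (unit, 'o, 'm) qcat" where
  "star Q X = \<lparr> cob = {()}, cty = (\<lambda>_. X), chom = (\<lambda>_ _. qid Q X) \<rparr>"

text \<open>A distributor Phi : A --> B is a function with Phi y x : t x --> t y
  (y an object of B, x an object of A); values outside objects are fixed to undefined.\<close>
definition distributor :: "('o, 'm) quantaloid \<Rightarrow> ('a, 'o, 'm) qcat \<Rightarrow> ('b, 'o, 'm) qcat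
    \<Rightarrow> ('b \<Rightarrow> 'a \<Rightarrow> 'm) \<Rightarrow> bool" where
  "distributor Q A B \<Phi> \<longleftrightarrow>
     (\<forall>x\<in>cob A. \<forall>y\<in>cob B. \<Phi> y x \<in> qhom Q (cty A x) (cty B y)) \<and>
     (\<forall>x\<in>cob A. \<forall>y\<in>cob B. \<forall>y'\<in>cob B.
        qle Q (qcomp Q (chom B y' y) (\<Phi> y x)) (\<Phi> y' x)) \<and>
     (\<forall>x\<in>cob A. \<forall>x'\<in>cob A. \<forall>y\<in>cob B.
        qle Q (qcomp Q (\<Phi> y x) (chom A x x')) (\<Phi> y x')) \<and>
     (\<forall>y x. \<not> (y \<in> cob B \<and> x \<in> cob A) \<longrightarrow> \<Phi> y x = undefined)"

definition dcomp :: "('o, 'm) quantaloid \<Rightarrow> ('a, 'o, 'm) qcat \<Rightarrow> ('b, 'o, 'm) qcat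
    \<Rightarrow> ('c, 'o, 'm) qcat \<Rightarrow> ('c \<Rightarrow> 'b \<Rightarrow> 'm) \<Rightarrow> ('b \<Rightarrow> 'a \<Rightarrow> 'm) \<Rightarrow> ('c \<Rightarrow> 'a \<Rightarrow> 'm)" where
  "dcomp Q A B C \<Psi> \<Phi> = (\<lambda>z x. if z \<in> cob C \<and> x \<in> cob A
     then qsup Q (cty A x) (cty C z) ((\<lambda>y. qcomp Q (\<Psi> z y) (\<Phi> y x)) ` cob B)
     else undefined)"

definition dle :: "('o, 'm) quantaloid \<Rightarrow> ('a, 'o, 'm) qcat \<Rightarrow> ('b, 'o, 'm) qcat
    \<Rightarrow> ('b \<Rightarrow> 'a \<Rightarrow> 'm) \<Rightarrow> ('b \<Rightarrow> 'a \<Rightarrow> 'm) \<Rightarrow> bool" where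
  "dle Q A B \<Phi> \<Psi> \<longleftrightarrow> (\<forall>x\<in>cob A. \<forall>y\<in>cob B. qle Q (\<Phi> y x) (\<Psi> y x))"

definition is_adj :: "('o, 'm) quantaloid \<Rightarrow> ('a, 'o, 'm) qcat \<Rightarrow> ('b, 'o, 'm) qcat
    \<Rightarrow> ('b \<Rightarrow> 'a \<Rightarrow> 'm) \<Rightarrow> ('a \<Rightarrow> 'b \<Rightarrow> 'm) \<Rightarrow> bool" where
  "is_adj Q A B \<Phi> \<Psi> \<longleftrightarrow> distributor Q A B \<Phi> \<and> distributor Q B A \<Psi> \<and>
     dle Q A A (chom A) (dcomp Q A B A \<Psi> \<Phi>) \<and>
     dle Q B B (dcomp Q B A B \<Phi> \<Psi>) (chom B)"

definition ladj :: "('o, 'm) quantaloid \<Rightarrow> ('a, 'o, 'm) qcat \<Rightarrow> ('b, 'o, 'm) qcat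
    \<Rightarrow> ('b \<Rightarrow> 'a \<Rightarrow> 'm) \<Rightarrow> bool" where
  "ladj Q A B \<Phi> \<longleftrightarrow> (\<exists>\<Psi>. is_adj Q A B \<Phi> \<Psi>)"

definition radj :: "('o, 'm) quantaloid \<Rightarrow> ('a, 'o, 'm) qcat \<Rightarrow> ('b, 'o, 'm) qcat
    \<Rightarrow> ('b \<Rightarrow> 'a \<Rightarrow> 'm) \<Rightarrow> ('a \<Rightarrow> 'b \<Rightarrow> 'm)" where
  "radj Q A B \<Phi> = (THE \<Psi>. is_adj Q A B \<Phi> \<Psi>)"

definition dual :: "('o, 'm) quantaloid \<Rightarrow> ('a, 'o, 'm) qcat \<Rightarrow> ('b, 'o, 'm) qcat
    \<Rightarrow> ('b \<Rightarrow> 'a \<Rightarrow> 'm) \<Rightarrow> ('a \<Rightarrow> 'b \<Rightarrow> 'm)" where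
  "dual Q A B \<Phi> = (\<lambda>x y. if x \<in> cob A \<and> y \<in> cob B then qinv Q (\<Phi> y x) else undefined)"

definition sym_ladj :: "('o, 'm) quantaloid \<Rightarrow> ('a, 'o, 'm) qcat \<Rightarrow> ('b, 'o, 'm) qcat
    \<Rightarrow> ('b \<Rightarrow> 'a \<Rightarrow> 'm) \<Rightarrow> bool" where
  "sym_ladj Q A B \<Phi> \<longleftrightarrow> is_adj Q A B \<Phi> (dual Q A B \<Phi>)"

definition dsym :: "('o, 'm) quantaloid \<Rightarrow> ('x, 'o, 'm) qcat \<Rightarrow> ('a, 'o, 'm) qcat
    \<Rightarrow> ('a \<Rightarrow> 'x \<Rightarrow> 'm) \<Rightarrow> ('a \<Rightarrow> 'x \<Rightarrow> 'm)" where
  "dsym Q X A \<Psi> = (\<lambda>a x. if a \<in> cob A \<and> x \<in> cob X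
     then qmeet Q (cty X x) (cty A a) (\<Psi> a x) (qinv Q (radj Q X A \<Psi> x a))
     else undefined)"

text \<open>Objects of A_cc: pairs (X, phi) with phi : *_X --> A a left adjoint presheaf (type X).
  Hom A_cc(psi, phi) is the unique element of psi^* (x) phi.\<close>
definition cc :: "('o, 'm) quantaloid \<Rightarrow> ('a, 'o, 'm) qcat
    \<Rightarrow> ('o \<times> ('a \<Rightarrow> unit \<Rightarrow> 'm), 'o, 'm) qcat" where
  "cc Q A = \<lparr> cob = {(X, \<phi>). X \<in> qobj Q \<and> ladj Q (star Q X) A \<phi>},
     cty = fst,
     chom = (\<lambda>p q. dcomp Q (star Q (fst q)) A (star Q (fst p))
                       (radj Q (star Q (fst p)) A (snd p)) (snd q) () ()) \<rparr>"

definition sc :: "('o, 'm) quantaloid \<Rightarrow> ('a, 'o, 'm) qcat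
    \<Rightarrow> ('o \<times> ('a \<Rightarrow> unit \<Rightarrow> 'm), 'o, 'm) qcat" where
  "sc Q B = \<lparr> cob = {p \<in> cob (cc Q B). sym_ladj Q (star Q (fst p)) B (snd p)},
     cty = cty (cc Q B), chom = chom (cc Q B) \<rparr>"

text \<open>The functor L_A : (A_s)_sc --> (A_cc)_s on objects, phi |-> A(-,S_A -) (x) phi,
  and the candidate inverse psi |-> psi_s.\<close>
definition Lfun :: "('o, 'm) quantaloid \<Rightarrow> ('a, 'o, 'm) qcat
    \<Rightarrow> 'o \<times> ('a \<Rightarrow> unit \<Rightarrow> 'm) \<Rightarrow> 'o \<times> ('a \<Rightarrow> unit \<Rightarrow> 'm)" where
  "Lfun Q A p = (fst p, dcomp Q (star Q (fst p)) (symz Q A) A (chom A) (snd p))"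

definition Linv :: "('o, 'm) quantaloid \<Rightarrow> ('a, 'o, 'm) qcat
    \<Rightarrow> 'o \<times> ('a \<Rightarrow> unit \<Rightarrow> 'm) \<Rightarrow> 'o \<times> ('a \<Rightarrow> unit \<Rightarrow> 'm)" where
  "Linv Q A p = (fst p, dsym Q (star Q (fst p)) A (snd p))"

end

theory Submission
  imports Defs
begin

locale iq =
  fixes Q :: "('o, 'm) quantaloid"
  assumes IQ: "involutive_quantaloid Q"
begin

abbreviation cm (infixl "\<odot>" 70) where "g \<odot> f \<equiv> qcomp Q g f"
abbreviation lq (infix "\<preceq>" 50) where "f \<preceq> g \<equiv> qle Q f g"
abbreviation iv where "iv f \<equiv> qinv Q f"
abbreviation sp where "sp \<equiv> qsup Q"
abbreviation hom where "hom \<equiv> qhom Q"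
abbreviation obj where "obj \<equiv> qobj Q"
abbreviation one where "one \<equiv> qid Q"

lemma QQ: "quantaloid Q" using IQ unfolding involutive_quantaloid_def by blast
lemmas qd = QQ[unfolded quantaloid_def]
lemmas qd1 = qd[THEN conjunct1]
lemmas qd2 = qd[THEN conjunct2, THEN conjunct1]
lemmas qd3 = qd[THEN conjunct2, THEN conjunct2, THEN conjunct1]
lemmas qd4 = qd[THEN conjunct2, THEN conjunct2, THEN conjunct2, THEN conjunct1]
lemmas qd5 = qd[THEN conjunct2, THEN conjunct2, THEN conjunct2, THEN conjunct2, THEN conjunct1]
lemmas qd6 = qd[THEN conjunct2, THEN conjunct2, THEN conjunct2, THEN conjunct2, THEN conjunct2, THEN conjunct1]
lemmas qd7 = qd[THEN conjunct2, THEN conjunct2, THEN conjunct2, THEN conjunct2, THEN conjunct2, THEN conjunct2]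
lemmas iqd = IQ[unfolded involutive_quantaloid_def]
lemmas iq1 = iqd[THEN conjunct2, THEN conjunct1]
lemmas iq2 = iqd[THEN conjunct2, THEN conjunct2, THEN conjunct1]
lemmas iq3 = iqd[THEN conjunct2, THEN conjunct2, THEN conjunct2]

lemma id_in[intro,simp]: "X \<in> obj \<Longrightarrow> one X \<in> hom X X"
  using qd1 by blast
lemma comp_in: "X \<in> obj \<Longrightarrow> Y \<in> obj \<Longrightarrow> Z \<in> obj \<Longrightarrow> f \<in> hom X Y \<Longrightarrow> g \<in> hom Y Z \<Longrightarrow> g \<odot> f \<in> hom X Z"
  using qd2 by blast
lemma assoc: "X \<in> obj \<Longrightarrow> Y \<in> obj \<Longrightarrow> Z \<in> obj \<Longrightarrow> W \<in> obj \<Longrightarrow> f \<in> hom X Y \<Longrightarrow> g \<in> hom Y Z \<Longrightarrow> h \<in> hom Z W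
   \<Longrightarrow> h \<odot> (g \<odot> f) = (h \<odot> g) \<odot> f"
  using qd3 by blast
lemma idl[simp]: "X \<in> obj \<Longrightarrow> Y \<in> obj \<Longrightarrow> f \<in> hom X Y \<Longrightarrow> one Y \<odot> f = f"
  using qd4 by blast
lemma idr[simp]: "X \<in> obj \<Longrightarrow> Y \<in> obj \<Longrightarrow> f \<in> hom X Y \<Longrightarrow> f \<odot> one X = f"
  using qd4 by blast
lemma refl[intro,simp]: "X \<in> obj \<Longrightarrow> Y \<in> obj \<Longrightarrow> f \<in> hom X Y \<Longrightarrow> f \<preceq> f"
  using qd5[rule_format, of X Y, THEN conjunct1] by blast
lemma trans: "X \<in> obj \<Longrightarrow> Y \<in> obj \<Longrightarrow> f \<in> hom X Y \<Longrightarrow> g \<in> hom X Y \<Longrightarrow> h \<in> hom X Y \<Longrightarrow> f \<preceq> g \<Longrightarrow> g \<preceq> h \<Longrightarrow> f \<preceq> h"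
  using qd5[rule_format, of X Y, THEN conjunct2, THEN conjunct1] by blast
lemma antisym: "X \<in> obj \<Longrightarrow> Y \<in> obj \<Longrightarrow> f \<in> hom X Y \<Longrightarrow> g \<in> hom X Y \<Longrightarrow> f \<preceq> g \<Longrightarrow> g \<preceq> f \<Longrightarrow> f = g"
  using qd5[rule_format, of X Y, THEN conjunct2, THEN conjunct2, THEN conjunct1] by blast
lemma sup_in[intro,simp]: "X \<in> obj \<Longrightarrow> Y \<in> obj \<Longrightarrow> S \<subseteq> hom X Y \<Longrightarrow> sp X Y S \<in> hom X Y"
  using qd5[rule_format, of X Y, THEN conjunct2, THEN conjunct2, THEN conjunct2] by blast
lemma sup_ub: "X \<in> obj \<Longrightarrow> Y \<in> obj \<Longrightarrow> S \<subseteq> hom X Y \<Longrightarrow> s \<in> S \<Longrightarrow> s \<preceq> sp X Y S"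
  using qd5[rule_format, of X Y, THEN conjunct2, THEN conjunct2, THEN conjunct2] by blast
lemma sup_least: "X \<in> obj \<Longrightarrow> Y \<in> obj \<Longrightarrow> S \<subseteq> hom X Y \<Longrightarrow> u \<in> hom X Y \<Longrightarrow> (\<And>s. s \<in> S \<Longrightarrow> s \<preceq> u) \<Longrightarrow> sp X Y S \<preceq> u"
  using qd5[rule_format, of X Y, THEN conjunct2, THEN conjunct2, THEN conjunct2] by blast
lemma comp_sup_r: "X \<in> obj \<Longrightarrow> Y \<in> obj \<Longrightarrow> Z \<in> obj \<Longrightarrow> f \<in> hom X Y \<Longrightarrow> S \<subseteq> hom Y Z \<Longrightarrow>
   sp Y Z S \<odot> f = sp X Z ((\<lambda>g. g \<odot> f) ` S)"
  using qd6 by blast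
lemma comp_sup_l: "X \<in> obj \<Longrightarrow> Y \<in> obj \<Longrightarrow> Z \<in> obj \<Longrightarrow> g \<in> hom Y Z \<Longrightarrow> S \<subseteq> hom X Y \<Longrightarrow>
   g \<odot> sp X Y S = sp X Z ((\<lambda>f. g \<odot> f) ` S)"
  using qd7 by blast
lemma inv_in[intro,simp]: "X \<in> obj \<Longrightarrow> Y \<in> obj \<Longrightarrow> f \<in> hom X Y \<Longrightarrow> iv f \<in> hom Y X"
  using iq1 by blast
lemma inv_inv[simp]: "X \<in> obj \<Longrightarrow> Y \<in> obj \<Longrightarrow> f \<in> hom X Y \<Longrightarrow> iv (iv f) = f"
  using iq1 by blast
lemma inv_mono: "X \<in> obj \<Longrightarrow> Y \<in> obj \<Longrightarrow> f \<in> hom X Y \<Longrightarrow> g \<in> hom X Y \<Longrightarrow> f \<preceq> g \<Longrightarrow> iv f \<preceq> iv g"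
  using iq2 by blast
lemma inv_comp: "X \<in> obj \<Longrightarrow> Y \<in> obj \<Longrightarrow> Z \<in> obj \<Longrightarrow> f \<in> hom X Y \<Longrightarrow> g \<in> hom Y Z \<Longrightarrow> iv (g \<odot> f) = iv f \<odot> iv g"
  using iq3 by blast

lemma sup_pair: assumes "X \<in> obj" "Y \<in> obj" "f \<in> hom X Y" "g \<in> hom X Y" "f \<preceq> g"
  shows "sp X Y {f, g} = g"
  apply (rule antisym[OF assms(1,2)])
  using assms by (auto intro!: sup_least sup_ub)

lemma mono_l: assumes "X \<in> obj" "Y \<in> obj" "Z \<in> obj" "f \<in> hom X Y" "f' \<in> hom X Y" "g \<in> hom Y Z" "f \<preceq> f'"
  shows "g \<odot> f \<preceq> g \<odot> f'"
proof -
  have "g \<odot> f' = sp X Z {g \<odot> f, g \<odot> f'}"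
    using comp_sup_l[of X Y Z g "{f,f'}"] sup_pair[of X Y f f'] assms by auto
  moreover have "g \<odot> f \<preceq> sp X Z {g \<odot> f, g \<odot> f'}"
    by (rule sup_ub) (use assms comp_in in auto)
  ultimately show ?thesis by simp
qed

lemma mono_r: assumes "X \<in> obj" "Y \<in> obj" "Z \<in> obj" "g \<in> hom Y Z" "g' \<in> hom Y Z" "f \<in> hom X Y" "g \<preceq> g'"
  shows "g \<odot> f \<preceq> g' \<odot> f"
proof -
  have "g' \<odot> f = sp X Z {g \<odot> f, g' \<odot> f}"
    using comp_sup_r[of X Y Z f "{g,g'}"] sup_pair[of Y Z g g'] assms by auto
  moreover have "g \<odot> f \<preceq> sp X Z {g \<odot> f, g' \<odot> f}"
    by (rule sup_ub) (use assms comp_in in auto)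
  ultimately show ?thesis by simp
qed

lemma mono2: assumes "X \<in> obj" "Y \<in> obj" "Z \<in> obj" "g \<in> hom Y Z" "g' \<in> hom Y Z" "f \<in> hom X Y" "f' \<in> hom X Y"
  "g \<preceq> g'" "f \<preceq> f'"
  shows "g \<odot> f \<preceq> g' \<odot> f'"
  by (rule trans[OF _ _ _ _ _ mono_r[of X Y Z g g' f] mono_l[of X Y Z f f' g'], of X Z]) (use assms comp_in in auto)

lemma inv_le_iff: "X \<in> obj \<Longrightarrow> Y \<in> obj \<Longrightarrow> f \<in> hom X Y \<Longrightarrow> g \<in> hom X Y \<Longrightarrow> iv f \<preceq> iv g \<longleftrightarrow> f \<preceq> g"
  by (metis inv_in inv_inv inv_mono)

lemma le_inv_iff: "X \<in> obj \<Longrightarrow> Y \<in> obj \<Longrightarrow> f \<in> hom X Y \<Longrightarrow> g \<in> hom Y X \<Longrightarrow> f \<preceq> iv g \<longleftrightarrow> iv f \<preceq> g"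
  by (metis inv_in inv_inv inv_mono)

lemma inv_id[simp]: assumes "X \<in> obj" shows "iv (one X) = one X"
proof -
  have i: "iv (one X) \<in> hom X X" using assms inv_in[of X X "one X"] by auto
  have "iv (one X) = iv (one X) \<odot> one X" using assms i idr[of X X "iv (one X)"] by auto
  also have "\<dots> = iv (iv (one X) \<odot> one X)" using assms i inv_comp[of X X X "one X" "iv (one X)"] by auto
  also have "\<dots> = iv (iv (one X))" using assms i idr[of X X "iv (one X)"] by auto
  also have "\<dots> = one X" using assms by simp
  finally show ?thesis .
qed

lemma sup_le_iff: "X \<in> obj \<Longrightarrow> Y \<in> obj \<Longrightarrow> S \<subseteq> hom X Y \<Longrightarrow> u \<in> hom X Y \<Longrightarrow> sp X Y S \<preceq> u \<longleftrightarrow> (\<forall>s\<in>S. s \<preceq> u)"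
  by (meson sup_in sup_least sup_ub subsetD trans)

lemma le_sup: "X \<in> obj \<Longrightarrow> Y \<in> obj \<Longrightarrow> S \<subseteq> hom X Y \<Longrightarrow> s \<in> S \<Longrightarrow> t \<in> hom X Y \<Longrightarrow> t \<preceq> s \<Longrightarrow> t \<preceq> sp X Y S"
  by (meson sup_in sup_ub subsetD trans)

lemma sup_mono: "X \<in> obj \<Longrightarrow> Y \<in> obj \<Longrightarrow> S \<subseteq> hom X Y \<Longrightarrow> T \<subseteq> hom X Y \<Longrightarrow> (\<And>s. s \<in> S \<Longrightarrow> \<exists>t\<in>T. s \<preceq> t) \<Longrightarrow> sp X Y S \<preceq> sp X Y T"
  by (meson le_sup sup_in sup_least subsetD)

lemma sup_single[simp]: "X \<in> obj \<Longrightarrow> Y \<in> obj \<Longrightarrow> f \<in> hom X Y \<Longrightarrow> sp X Y {f} = f"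
  apply (rule antisym[of X Y])
  apply (auto intro!: sup_in sup_least sup_ub)
  done

lemma inv_sup: assumes "X \<in> obj" "Y \<in> obj" "S \<subseteq> hom X Y"
  shows "iv (sp X Y S) = sp Y X (iv ` S)"
proof -
  have S': "iv ` S \<subseteq> hom Y X" using assms by auto
  have 1: "sp Y X (iv ` S) \<preceq> iv (sp X Y S)"
  proof (rule sup_least[of Y X])
    fix s assume "s \<in> iv ` S"
    then obtain t where t: "t \<in> S" "s = iv t" by auto
    show "s \<preceq> iv (sp X Y S)" using t assms inv_mono[of X Y t "sp X Y S"] sup_ub[of X Y S t] by auto
  qed (use assms S' in auto)
  have "sp X Y S \<preceq> iv (sp Y X (iv ` S))"
  proof (rule sup_least[OF assms])
    show "iv (sp Y X (iv ` S)) \<in> hom X Y" using assms S' by auto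
    fix s assume "s \<in> S"
    have sS: "s \<in> hom X Y" using \<open>s \<in> S\<close> assms by auto
    have "iv s \<preceq> sp Y X (iv ` S)" using assms S' \<open>s \<in> S\<close> sup_ub[of Y X "iv ` S" "iv s"] by auto
    then have "iv (iv s) \<preceq> iv (sp Y X (iv ` S))"
      using inv_mono[of Y X "iv s" "sp Y X (iv ` S)"] assms S' sS inv_in[of X Y s] sup_in[of Y X "iv ` S"] by blast
    then show "s \<preceq> iv (sp Y X (iv ` S))" using assms sS by simp
  qed
  then have "iv (sp X Y S) \<preceq> iv (iv (sp Y X (iv ` S)))" 
    using inv_mono[of X Y "sp X Y S" "iv (sp Y X (iv ` S))"] assms S' inv_in[of Y X] sup_in[of X Y S] sup_in[of Y X "iv ` S"] by blast
  then have 2: "iv (sp X Y S) \<preceq> sp Y X (iv ` S)" using assms S' sup_in[of Y X "iv ` S"] by simp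
  show ?thesis using antisym[OF assms(2,1) _ _ 2 1] assms S' sup_in[of Y X "iv ` S"] sup_in[of X Y S] inv_in[of X Y] by blast
qed

abbreviation mt where "mt \<equiv> qmeet Q"

lemma meet_in[intro,simp]: "X \<in> obj \<Longrightarrow> Y \<in> obj \<Longrightarrow> mt X Y f g \<in> hom X Y"
  unfolding qmeet_def by (auto intro!: sup_in)
lemma meet_le1: "X \<in> obj \<Longrightarrow> Y \<in> obj \<Longrightarrow> f \<in> hom X Y \<Longrightarrow> mt X Y f g \<preceq> f"
  unfolding qmeet_def by (auto intro!: sup_least)
lemma meet_le2: "X \<in> obj \<Longrightarrow> Y \<in> obj \<Longrightarrow> g \<in> hom X Y \<Longrightarrow> mt X Y f g \<preceq> g"
  unfolding qmeet_def by (auto intro!: sup_least)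
lemma meet_gr: "X \<in> obj \<Longrightarrow> Y \<in> obj \<Longrightarrow> h \<in> hom X Y \<Longrightarrow> h \<preceq> f \<Longrightarrow> h \<preceq> g \<Longrightarrow> h \<preceq> mt X Y f g"
  unfolding qmeet_def by (auto intro!: sup_ub)


definition leq where "leq X Y f g \<longleftrightarrow> X \<in> obj \<and> Y \<in> obj \<and> f \<in> hom X Y \<and> g \<in> hom X Y \<and> f \<preceq> g"

lemma leq_trans[trans]: "leq X Y f g \<Longrightarrow> leq X Y g h \<Longrightarrow> leq X Y f h"
  unfolding leq_def using trans by blast
lemma leqI: "X \<in> obj \<Longrightarrow> Y \<in> obj \<Longrightarrow> f \<in> hom X Y \<Longrightarrow> g \<in> hom X Y \<Longrightarrow> f \<preceq> g \<Longrightarrow> leq X Y f g"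
  unfolding leq_def by blast
lemma leqD: "leq X Y f g \<Longrightarrow> f \<preceq> g" "leq X Y f g \<Longrightarrow> f \<in> hom X Y" "leq X Y f g \<Longrightarrow> g \<in> hom X Y"
  "leq X Y f g \<Longrightarrow> X \<in> obj" "leq X Y f g \<Longrightarrow> Y \<in> obj"
  unfolding leq_def by blast+
lemma leq_refl: "X \<in> obj \<Longrightarrow> Y \<in> obj \<Longrightarrow> f \<in> hom X Y \<Longrightarrow> leq X Y f f"
  unfolding leq_def by auto
lemma leq_mono_r: "leq Y Z g g' \<Longrightarrow> X \<in> obj \<Longrightarrow> f \<in> hom X Y \<Longrightarrow> leq X Z (g \<odot> f) (g' \<odot> f)"
  unfolding leq_def using mono_r[of X Y Z g g' f] comp_in[of X Y Z f] by blast
lemma leq_mono_l: "leq X Y f f' \<Longrightarrow> Z \<in> obj \<Longrightarrow> g \<in> hom Y Z \<Longrightarrow> leq X Z (g \<odot> f) (g \<odot> f')"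
  unfolding leq_def using mono_l[of X Y Z f f' g] comp_in[of X Y Z _ g] by blast
lemma leq_mono2: "leq Y Z g g' \<Longrightarrow> leq X Y f f' \<Longrightarrow> leq X Z (g \<odot> f) (g' \<odot> f')"
  unfolding leq_def using mono2[of X Y Z g g' f f'] comp_in[of X Y Z] by blast
lemma leq_inv: "leq X Y f g \<Longrightarrow> leq Y X (iv f) (iv g)"
  unfolding leq_def using inv_mono[of X Y f g] inv_in[of X Y] by blast
lemma leq_sup_ub: "X \<in> obj \<Longrightarrow> Y \<in> obj \<Longrightarrow> S \<subseteq> hom X Y \<Longrightarrow> s \<in> S \<Longrightarrow> leq X Y s (sp X Y S)"
  unfolding leq_def using sup_ub sup_in by blast
lemma leq_sup_least: "X \<in> obj \<Longrightarrow> Y \<in> obj \<Longrightarrow> S \<subseteq> hom X Y \<Longrightarrow> u \<in> hom X Y \<Longrightarrow> (\<And>s. s \<in> S \<Longrightarrow> s \<preceq> u) \<Longrightarrow> leq X Y (sp X Y S) u"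
  unfolding leq_def using sup_least sup_in by blast
lemma leq_sup_mono: "X \<in> obj \<Longrightarrow> Y \<in> obj \<Longrightarrow> S \<subseteq> hom X Y \<Longrightarrow> T \<subseteq> hom X Y \<Longrightarrow> (\<And>s. s \<in> S \<Longrightarrow> \<exists>t\<in>T. s \<preceq> t) \<Longrightarrow> leq X Y (sp X Y S) (sp X Y T)"
  unfolding leq_def using sup_mono sup_in by blast
lemma leq_meet_gr: "leq X Y h f \<Longrightarrow> leq X Y h g \<Longrightarrow> leq X Y h (mt X Y f g)"
  unfolding leq_def using meet_gr meet_in by blast
lemma leq_meet1: "X \<in> obj \<Longrightarrow> Y \<in> obj \<Longrightarrow> f \<in> hom X Y \<Longrightarrow> leq X Y (mt X Y f g) f"
  unfolding leq_def using meet_le1 meet_in by blast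
lemma leq_meet2: "X \<in> obj \<Longrightarrow> Y \<in> obj \<Longrightarrow> g \<in> hom X Y \<Longrightarrow> leq X Y (mt X Y f g) g"
  unfolding leq_def using meet_le2 meet_in by blast
lemma leq_antisym: "leq X Y f g \<Longrightarrow> leq X Y g f \<Longrightarrow> f = g"
  unfolding leq_def using antisym by blast

end

context iq begin

lemma cat_ty[simp]: "qcategory Q A \<Longrightarrow> x \<in> cob A \<Longrightarrow> cty A x \<in> obj"
  unfolding qcategory_def by blast
lemma cat_hom[simp]: "qcategory Q A \<Longrightarrow> x \<in> cob A \<Longrightarrow> y \<in> cob A \<Longrightarrow> chom A y x \<in> hom (cty A x) (cty A y)"
  unfolding qcategory_def by blast
lemma cat_comp: "qcategory Q A \<Longrightarrow> x \<in> cob A \<Longrightarrow> y \<in> cob A \<Longrightarrow> z \<in> cob A \<Longrightarrow> chom A z y \<odot> chom A y x \<preceq> chom A z x"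
  unfolding qcategory_def by blast
lemma cat_id: "qcategory Q A \<Longrightarrow> x \<in> cob A \<Longrightarrow> one (cty A x) \<preceq> chom A x x"
  unfolding qcategory_def by blast

lemma distr_in[simp]: "distributor Q A B \<Phi> \<Longrightarrow> x \<in> cob A \<Longrightarrow> y \<in> cob B \<Longrightarrow> \<Phi> y x \<in> hom (cty A x) (cty B y)"
  unfolding distributor_def by blast
lemma distr_l: "distributor Q A B \<Phi> \<Longrightarrow> x \<in> cob A \<Longrightarrow> y \<in> cob B \<Longrightarrow> y' \<in> cob B \<Longrightarrow> chom B y' y \<odot> \<Phi> y x \<preceq> \<Phi> y' x"
  unfolding distributor_def by blast
lemma distr_r: "distributor Q A B \<Phi> \<Longrightarrow> x \<in> cob A \<Longrightarrow> x' \<in> cob A \<Longrightarrow> y \<in> cob B \<Longrightarrow> \<Phi> y x \<odot> chom A x x' \<preceq> \<Phi> y x'"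
  unfolding distributor_def by blast
lemma distr_undef: "distributor Q A B \<Phi> \<Longrightarrow> \<not> (y \<in> cob B \<and> x \<in> cob A) \<Longrightarrow> \<Phi> y x = undefined"
  unfolding distributor_def by blast

lemma symz_cob[simp]: "cob (symz Q A) = cob A" by (simp add: symz_def)
lemma symz_cty[simp]: "cty (symz Q A) = cty A" by (simp add: symz_def)
lemma symz_hom[simp]: "x \<in> cob A \<Longrightarrow> y \<in> cob A \<Longrightarrow>
  chom (symz Q A) y x = mt (cty A x) (cty A y) (chom A y x) (iv (chom A x y))"
  by (simp add: symz_def)

lemma symz_in[simp]: "qcategory Q A \<Longrightarrow> x \<in> cob A \<Longrightarrow> y \<in> cob A \<Longrightarrow> chom (symz Q A) y x \<in> hom (cty A x) (cty A y)"
  by simp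
lemma symz_le1: "qcategory Q A \<Longrightarrow> x \<in> cob A \<Longrightarrow> y \<in> cob A \<Longrightarrow> chom (symz Q A) y x \<preceq> chom A y x"
  by (simp add: meet_le1)
lemma symz_le2: "qcategory Q A \<Longrightarrow> x \<in> cob A \<Longrightarrow> y \<in> cob A \<Longrightarrow> chom (symz Q A) y x \<preceq> iv (chom A x y)"
  using meet_le2 inv_in cat_hom cat_ty by simp
lemma symz_gr: "qcategory Q A \<Longrightarrow> x \<in> cob A \<Longrightarrow> y \<in> cob A \<Longrightarrow> h \<in> hom (cty A x) (cty A y) \<Longrightarrow>
   h \<preceq> chom A y x \<Longrightarrow> h \<preceq> iv (chom A x y) \<Longrightarrow> h \<preceq> chom (symz Q A) y x"
  using meet_gr by simp

lemma symz_inv_le: assumes "qcategory Q A" "x \<in> cob A" "y \<in> cob A"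
  shows "iv (chom (symz Q A) y x) \<preceq> chom (symz Q A) x y"
proof -
  let ?X = "cty A x" and ?Y = "cty A y"
  have o: "?X \<in> obj" "?Y \<in> obj" using assms by auto
  have s: "chom (symz Q A) y x \<in> hom ?X ?Y" using assms by simp
  have i: "iv (chom (symz Q A) y x) \<in> hom ?Y ?X" using inv_in[OF o s] .
  show ?thesis
  proof (rule symz_gr[OF assms(1,3,2) i])
    show "iv (chom (symz Q A) y x) \<preceq> chom A x y"
      using le_inv_iff[OF o(1) o(2) s, of "chom A x y"] symz_le2[OF assms] assms by simp
    show "iv (chom (symz Q A) y x) \<preceq> iv (chom A y x)"
      using inv_mono[OF o s, of "chom A y x"] symz_le1[OF assms] assms by simp
  qed
qed

lemma symz_cat: assumes A: "qcategory Q A" shows "qcategory Q (symz Q A)"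
  unfolding qcategory_def
proof (intro conjI ballI)
  fix x assume x: "x \<in> cob (symz Q A)"
  then show "cty (symz Q A) x \<in> obj" using A by simp
  have o: "cty A x \<in> obj" using A x by simp
  have "iv (one (cty A x)) \<preceq> iv (chom A x x)"
    using inv_mono[OF o o _ _ cat_id[OF A]] A x o by simp
  then have "one (cty A x) \<preceq> iv (chom A x x)" using o by simp
  then show "one (cty (symz Q A) x) \<preceq> chom (symz Q A) x x"
    using symz_gr[OF A, of x x "one (cty A x)"] x A cat_id[OF A, of x] o by simp
next
  fix x y assume "x \<in> cob (symz Q A)" "y \<in> cob (symz Q A)"
  then show "chom (symz Q A) y x \<in> qhom Q (cty (symz Q A) x) (cty (symz Q A) y)" using A by simp
next
  fix x y z assume xyz: "x \<in> cob (symz Q A)" "y \<in> cob (symz Q A)" "z \<in> cob (symz Q A)"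
  then have x: "x \<in> cob A" and y: "y \<in> cob A" and z: "z \<in> cob A" by auto
  let ?X = "cty A x" and ?Y = "cty A y" and ?Z = "cty A z"
  have o: "?X \<in> obj" "?Y \<in> obj" "?Z \<in> obj" using A x y z by auto
  have h1: "chom (symz Q A) y x \<in> hom ?X ?Y" and h2: "chom (symz Q A) z y \<in> hom ?Y ?Z"
    using A x y z by auto
  have c: "chom (symz Q A) z y \<odot> chom (symz Q A) y x \<in> hom ?X ?Z" using comp_in[OF o h1 h2] .
  show "chom (symz Q A) z y \<odot> chom (symz Q A) y x \<preceq> chom (symz Q A) z x"
  proof (rule symz_gr[OF A x z c])
    have "chom (symz Q A) z y \<odot> chom (symz Q A) y x \<preceq> chom A z y \<odot> chom A y x"
      by (rule mono2[OF o]) (use A x y z symz_le1[OF A x y] symz_le1[OF A y z] in auto)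
    then show "chom (symz Q A) z y \<odot> chom (symz Q A) y x \<preceq> chom A z x"
      using trans[OF o(1) o(3) c _ _ _ cat_comp[OF A x y z]] comp_in[OF o] A x y z by auto
    have "chom (symz Q A) z y \<odot> chom (symz Q A) y x \<preceq> iv (chom A y z) \<odot> iv (chom A x y)"
      by (rule mono2[OF o]) (use A x y z symz_le2[OF A x y] symz_le2[OF A y z] in auto)
    also have "iv (chom A y z) \<odot> iv (chom A x y) = iv (chom A x y \<odot> chom A y z)"
      using inv_comp[of ?Z ?Y ?X] o A x y z by auto
    finally have 1: "chom (symz Q A) z y \<odot> chom (symz Q A) y x \<preceq> iv (chom A x y \<odot> chom A y z)" .
    have 2: "iv (chom A x y \<odot> chom A y z) \<preceq> iv (chom A x z)"
      using inv_mono[of ?Z ?X] cat_comp[OF A z y x] comp_in[of ?Z ?Y ?X] o A x y z by auto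
    show "chom (symz Q A) z y \<odot> chom (symz Q A) y x \<preceq> iv (chom A x z)"
      using trans[OF o(1) o(3) c _ _ 1 2] inv_in comp_in[of ?Z ?Y ?X] o A x y z by auto
  qed
qed

end

context iq begin

lemma sup_comp_le: "X \<in> obj \<Longrightarrow> Y \<in> obj \<Longrightarrow> Z \<in> obj \<Longrightarrow> f \<in> hom X Y \<Longrightarrow> S \<subseteq> hom Y Z \<Longrightarrow> u \<in> hom X Z \<Longrightarrow>
   (\<And>s. s \<in> S \<Longrightarrow> s \<odot> f \<preceq> u) \<Longrightarrow> sp Y Z S \<odot> f \<preceq> u"
  by (subst comp_sup_r[of X Y Z], simp_all, rule sup_least) (auto intro: comp_in)

lemma comp_sup_le: "X \<in> obj \<Longrightarrow> Y \<in> obj \<Longrightarrow> Z \<in> obj \<Longrightarrow> g \<in> hom Y Z \<Longrightarrow> S \<subseteq> hom X Y \<Longrightarrow> u \<in> hom X Z \<Longrightarrow>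
   (\<And>s. s \<in> S \<Longrightarrow> g \<odot> s \<preceq> u) \<Longrightarrow> g \<odot> sp X Y S \<preceq> u"
  by (subst comp_sup_l[of X Y Z], simp_all, rule sup_least) (auto intro: comp_in)

lemma adj_iff: assumes A: "qcategory Q A" and B: "qcategory Q B"
  shows "is_adj Q A B \<Phi> \<Psi> \<longleftrightarrow> distributor Q A B \<Phi> \<and> distributor Q B A \<Psi> \<and>
    (\<forall>x\<in>cob A. \<forall>x'\<in>cob A. chom A x' x \<preceq> sp (cty A x) (cty A x') ((\<lambda>y. \<Psi> x' y \<odot> \<Phi> y x) ` cob B)) \<and>
    (\<forall>x\<in>cob A. \<forall>y\<in>cob B. \<forall>y'\<in>cob B. \<Phi> y' x \<odot> \<Psi> x y \<preceq> chom B y' y)"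
proof -
  have 1: "dle Q A A (chom A) (dcomp Q A B A \<Psi> \<Phi>) \<longleftrightarrow>
    (\<forall>x\<in>cob A. \<forall>x'\<in>cob A. chom A x' x \<preceq> sp (cty A x) (cty A x') ((\<lambda>y. \<Psi> x' y \<odot> \<Phi> y x) ` cob B))"
    by (simp add: dle_def dcomp_def)
  have 2: "dle Q B B (dcomp Q B A B \<Phi> \<Psi>) (chom B) \<longleftrightarrow>
    (\<forall>x\<in>cob A. \<forall>y\<in>cob B. \<forall>y'\<in>cob B. \<Phi> y' x \<odot> \<Psi> x y \<preceq> chom B y' y)"
    if D: "distributor Q A B \<Phi>" "distributor Q B A \<Psi>"
  proof -
    have "sp (cty B y) (cty B y') ((\<lambda>x. \<Phi> y' x \<odot> \<Psi> x y) ` cob A) \<preceq> chom B y' y \<longleftrightarrow>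
      (\<forall>x\<in>cob A. \<Phi> y' x \<odot> \<Psi> x y \<preceq> chom B y' y)" if y: "y \<in> cob B" "y' \<in> cob B" for y y'
    proof -
      have "(\<lambda>x. \<Phi> y' x \<odot> \<Psi> x y) ` cob A \<subseteq> hom (cty B y) (cty B y')"
      proof (rule image_subsetI)
        fix x assume "x \<in> cob A"
        then show "\<Phi> y' x \<odot> \<Psi> x y \<in> hom (cty B y) (cty B y')"
          using D A B y comp_in[of "cty B y" "cty A x" "cty B y'"] by auto
      qed
      then show ?thesis using sup_le_iff[of "cty B y" "cty B y'"] A B y by auto
    qed
    note e = this
    have "dle Q B B (dcomp Q B A B \<Phi> \<Psi>) (chom B) \<longleftrightarrow>
      (\<forall>y\<in>cob B. \<forall>y'\<in>cob B. sp (cty B y) (cty B y') ((\<lambda>x. \<Phi> y' x \<odot> \<Psi> x y) ` cob A) \<preceq> chom B y' y)"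
      unfolding dle_def dcomp_def by simp
    also have "\<dots> \<longleftrightarrow> (\<forall>y\<in>cob B. \<forall>y'\<in>cob B. \<forall>x\<in>cob A. \<Phi> y' x \<odot> \<Psi> x y \<preceq> chom B y' y)"
      using e by (intro ball_cong) simp_all
    finally show ?thesis by blast
  qed
  show ?thesis unfolding is_adj_def using 1 2 by (intro iffI; elim conjE; intro conjI; simp)
qed

lemma adj_le: assumes A: "qcategory Q A" and B: "qcategory Q B"
  and a1: "is_adj Q A B \<Phi> \<Psi>1" and a2: "is_adj Q A B \<Phi> \<Psi>2" and x: "x \<in> cob A" and y: "y \<in> cob B"
  shows "\<Psi>1 x y \<preceq> \<Psi>2 x y"
proof -
  note a1' = a1[unfolded adj_iff[OF A B]] and a2' = a2[unfolded adj_iff[OF A B]]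
  let ?X = "cty A x" and ?Y = "cty B y"
  have o: "?X \<in> obj" "?Y \<in> obj" using A B x y by auto
  have t1: "\<Psi>1 x y \<in> hom ?Y ?X" using a1' x y by auto
  let ?S = "(\<lambda>y'. \<Psi>2 x y' \<odot> \<Phi> y' x) ` cob B"
  have S: "?S \<subseteq> hom ?X ?X"
  proof (rule image_subsetI)
    fix y' assume "y' \<in> cob B"
    then show "\<Psi>2 x y' \<odot> \<Phi> y' x \<in> hom ?X ?X"
      using a1' a2' A B x comp_in[of ?X "cty B y'" ?X] by auto
  qed
  have "\<Psi>1 x y = one ?X \<odot> \<Psi>1 x y" using o t1 by simp
  also have "leq ?Y ?X \<dots> (sp ?X ?X ?S \<odot> \<Psi>1 x y)"
  proof (rule leq_mono_r[OF _ o(2) t1])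
    show "leq ?X ?X (one ?X) (sp ?X ?X ?S)"
      using leq_trans[OF leqI[OF o(1) o(1) _ _ cat_id[OF A x]] leqI[of ?X ?X "chom A x x" "sp ?X ?X ?S"]] a2' x S A o by auto
  qed
  also have "leq ?Y ?X \<dots> (\<Psi>2 x y)"
    unfolding leq_def
  proof (intro conjI)
    show "sp ?X ?X ?S \<odot> \<Psi>1 x y \<preceq> \<Psi>2 x y"
    proof (rule sup_comp_le[OF o(2) o(1) o(1) t1 S])
      show "\<Psi>2 x y \<in> hom ?Y ?X" using a2' x y by auto
      fix s assume "s \<in> ?S"
      then obtain y' where y': "y' \<in> cob B" "s = \<Psi>2 x y' \<odot> \<Phi> y' x" by auto
      have o': "cty B y' \<in> obj" using B y' by auto
      have ty: "\<Psi>2 x y' \<in> hom (cty B y') ?X" "\<Phi> y' x \<in> hom ?X (cty B y')" using a1' a2' x y' by auto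
      have "s \<odot> \<Psi>1 x y = \<Psi>2 x y' \<odot> (\<Phi> y' x \<odot> \<Psi>1 x y)"
        using y' assoc[OF o(2) o(1) o' o(1) t1 ty(2) ty(1)] by simp
      also have "leq ?Y ?X \<dots> (\<Psi>2 x y' \<odot> chom B y' y)"
        by (rule leq_mono_l[OF leqI o(1) ty(1)]) (use a1' x y y' ty t1 o o' B comp_in[of ?Y ?X "cty B y'"] in auto)
      also have "leq ?Y ?X \<dots> (\<Psi>2 x y)" 
        by (rule leqI) (use distr_r[of B A \<Psi>2 y' y x] a2' x y y' o o' B comp_in[of ?Y "cty B y'" ?X] in auto)
      finally show "s \<odot> \<Psi>1 x y \<preceq> \<Psi>2 x y" by (rule leqD)
    qed
  qed (use o t1 S a2' x y comp_in[of ?Y ?X ?X] in auto)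
  finally show ?thesis by (rule leqD)
qed

lemma adj_unique: assumes A: "qcategory Q A" and B: "qcategory Q B"
  and a1: "is_adj Q A B \<Phi> \<Psi>1" and a2: "is_adj Q A B \<Phi> \<Psi>2"
  shows "\<Psi>1 = \<Psi>2"
proof (intro ext)
  fix x y
  show "\<Psi>1 x y = \<Psi>2 x y"
  proof (cases "x \<in> cob A \<and> y \<in> cob B")
    case True
    then show ?thesis using adj_le[OF A B a1 a2] adj_le[OF A B a2 a1] antisym[of "cty B y" "cty A x"]
      a1[unfolded adj_iff[OF A B]] a2[unfolded adj_iff[OF A B]] A B by auto
  next
    case False
    then show ?thesis using distr_undef[of B A \<Psi>1 x y] distr_undef[of B A \<Psi>2 x y]
      a1[unfolded adj_iff[OF A B]] a2[unfolded adj_iff[OF A B]] by auto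
  qed
qed

lemma radj_eq: "qcategory Q A \<Longrightarrow> qcategory Q B \<Longrightarrow> is_adj Q A B \<Phi> \<Psi> \<Longrightarrow> radj Q A B \<Phi> = \<Psi>"
  unfolding radj_def using adj_unique by blast

lemma radj_adj: "qcategory Q A \<Longrightarrow> qcategory Q B \<Longrightarrow> ladj Q A B \<Phi> \<Longrightarrow> is_adj Q A B \<Phi> (radj Q A B \<Phi>)"
  unfolding ladj_def using radj_eq by metis

end

context iq begin
declare symz_hom[simp del]

lemma leq_cat: "qcategory Q A \<Longrightarrow> x \<in> cob A \<Longrightarrow> y \<in> cob A \<Longrightarrow> z \<in> cob A \<Longrightarrow>
  leq (cty A x) (cty A z) (chom A z y \<odot> chom A y x) (chom A z x)"
  by (rule leqI) (simp_all add: cat_comp comp_in[of "cty A x" "cty A y" "cty A z"])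

lemma dual_distr: assumes A: "qcategory Q A" and B: "qcategory Q B"
  and D: "distributor Q (symz Q A) (symz Q B) \<Phi>"
  shows "distributor Q (symz Q B) (symz Q A) (dual Q (symz Q A) (symz Q B) \<Phi>)"
  unfolding distributor_def
proof (intro conjI ballI allI impI)
  fix b a assume b: "b \<in> cob (symz Q B)" and a: "a \<in> cob (symz Q A)"
  then show "dual Q (symz Q A) (symz Q B) \<Phi> a b \<in> hom (cty (symz Q B) b) (cty (symz Q A) a)"
    using distr_in[OF D, of a b] A B by (simp add: dual_def)
next
  fix b a a' assume b: "b \<in> cob (symz Q B)" and a: "a \<in> cob (symz Q A)" and a': "a' \<in> cob (symz Q A)"
  let ?a = "cty A a" and ?a' = "cty A a'" and ?b = "cty B b"
  have o: "?a \<in> obj" "?a' \<in> obj" "?b \<in> obj" using A B a a' b by auto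
  have t: "\<Phi> b a \<in> hom ?a ?b" "\<Phi> b a' \<in> hom ?a' ?b" using distr_in[OF D] a a' b by auto
  have s: "chom (symz Q A) a' a \<in> hom ?a ?a'" "chom (symz Q A) a a' \<in> hom ?a' ?a" using A a a' by auto
  have "chom (symz Q A) a' a \<odot> iv (\<Phi> b a) = iv (\<Phi> b a \<odot> iv (chom (symz Q A) a' a))"
    using inv_comp[of ?a' ?a ?b "iv (chom (symz Q A) a' a)" "\<Phi> b a"] o t s by simp
  also have "leq ?b ?a' \<dots> (iv (\<Phi> b a'))"
  proof (rule leq_inv)
    have "leq ?a' ?b (\<Phi> b a \<odot> iv (chom (symz Q A) a' a)) (\<Phi> b a \<odot> chom (symz Q A) a a')"
      by (rule leq_mono_l[OF leqI o(3) t(1)]) (use o s symz_inv_le[OF A] a a' in auto)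
    also have "leq ?a' ?b \<dots> (\<Phi> b a')"
      using distr_r[OF D, of a a' b] a a' b by (intro leqI[OF o(2) o(3) comp_in[OF o(2) o(1) o(3) s(2) t(1)] t(2)]) simp
    finally show "leq ?a' ?b (\<Phi> b a \<odot> iv (chom (symz Q A) a' a)) (\<Phi> b a')" .
  qed
  finally show "chom (symz Q A) a' a \<odot> dual Q (symz Q A) (symz Q B) \<Phi> a b \<preceq> dual Q (symz Q A) (symz Q B) \<Phi> a' b"
    using a a' b by (simp add: dual_def leqD)
next
  fix b b' a assume b: "b \<in> cob (symz Q B)" and b': "b' \<in> cob (symz Q B)" and a: "a \<in> cob (symz Q A)"
  let ?a = "cty A a" and ?b' = "cty B b'" and ?b = "cty B b"
  have o: "?a \<in> obj" "?b' \<in> obj" "?b \<in> obj" using A B a b' b by auto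
  have t: "\<Phi> b a \<in> hom ?a ?b" "\<Phi> b' a \<in> hom ?a ?b'" using distr_in[OF D] a b' b by auto
  have s: "chom (symz Q B) b b' \<in> hom ?b' ?b" "chom (symz Q B) b' b \<in> hom ?b ?b'" using B b b' by auto
  have "iv (\<Phi> b a) \<odot> chom (symz Q B) b b' = iv (iv (chom (symz Q B) b b') \<odot> \<Phi> b a)"
    using inv_comp[of ?a ?b ?b' "\<Phi> b a" "iv (chom (symz Q B) b b')"] o t s by simp
  also have "leq ?b' ?a \<dots> (iv (\<Phi> b' a))"
  proof (rule leq_inv)
    have "leq ?a ?b' (iv (chom (symz Q B) b b') \<odot> \<Phi> b a) (chom (symz Q B) b' b \<odot> \<Phi> b a)"
      by (rule leq_mono_r[OF leqI o(1) t(1)]) (use o s symz_inv_le[OF B] b b' in auto)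
    also have "leq ?a ?b' \<dots> (\<Phi> b' a)"
      using distr_l[OF D, of a b b'] a b b' by (intro leqI[OF o(1) o(2) comp_in[OF o(1) o(3) o(2) t(1) s(2)] t(2)]) simp
    finally show "leq ?a ?b' (iv (chom (symz Q B) b b') \<odot> \<Phi> b a) (\<Phi> b' a)" .
  qed
  finally show "dual Q (symz Q A) (symz Q B) \<Phi> a b \<odot> chom (symz Q B) b b' \<preceq> dual Q (symz Q A) (symz Q B) \<Phi> a b'"
    using a b b' by (simp add: dual_def leqD)
next
  fix y x assume "\<not> (y \<in> cob (symz Q A) \<and> x \<in> cob (symz Q B))"
  then show "dual Q (symz Q A) (symz Q B) \<Phi> y x = undefined" by (auto simp add: dual_def)
qed


lemma dsym_val: assumes X: "qcategory Q XX" and A: "qcategory Q A" and adj: "is_adj Q XX A \<Psi> R"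
  and x: "x \<in> cob XX" and a: "a \<in> cob A"
  shows "dsym Q XX A \<Psi> a x = mt (cty XX x) (cty A a) (\<Psi> a x) (iv (R x a))"
  using radj_eq[OF X A adj] x a by (simp add: dsym_def)

lemma dsym_b: assumes X: "qcategory Q XX" and A: "qcategory Q A" and adj: "is_adj Q XX A \<Psi> R"
  and x: "x \<in> cob XX" and a: "a \<in> cob A"
  shows "leq (cty XX x) (cty A a) (dsym Q XX A \<Psi> a x) (\<Psi> a x)"
    "leq (cty XX x) (cty A a) (dsym Q XX A \<Psi> a x) (iv (R x a))"
    "leq (cty A a) (cty XX x) (iv (dsym Q XX A \<Psi> a x)) (R x a)"
    "leq (cty A a) (cty XX x) (iv (dsym Q XX A \<Psi> a x)) (iv (\<Psi> a x))"
    "dsym Q XX A \<Psi> a x \<in> hom (cty XX x) (cty A a)"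
proof -
  note adj' = adj[unfolded adj_iff[OF X A]]
  have o: "cty XX x \<in> obj" "cty A a \<in> obj" using X A x a by auto
  have t: "\<Psi> a x \<in> hom (cty XX x) (cty A a)" "R x a \<in> hom (cty A a) (cty XX x)" using adj' x a by auto
  show 1: "leq (cty XX x) (cty A a) (dsym Q XX A \<Psi> a x) (\<Psi> a x)"
    unfolding dsym_val[OF X A adj x a] using leq_meet1[OF o t(1)] .
  show 2: "leq (cty XX x) (cty A a) (dsym Q XX A \<Psi> a x) (iv (R x a))"
    unfolding dsym_val[OF X A adj x a] using leq_meet2[OF o inv_in[OF o(2,1) t(2)]] .
  show "leq (cty A a) (cty XX x) (iv (dsym Q XX A \<Psi> a x)) (R x a)"
    using leq_inv[OF 2] o t by simp
  show "leq (cty A a) (cty XX x) (iv (dsym Q XX A \<Psi> a x)) (iv (\<Psi> a x))"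
    using leq_inv[OF 1] .
  show "dsym Q XX A \<Psi> a x \<in> hom (cty XX x) (cty A a)" using 1 by (rule leqD)
qed

lemma dsym_gr: assumes X: "qcategory Q XX" and A: "qcategory Q A" and adj: "is_adj Q XX A \<Psi> R"
  and x: "x \<in> cob XX" and a: "a \<in> cob A"
  and "leq (cty XX x) (cty A a) h (\<Psi> a x)" "leq (cty XX x) (cty A a) h (iv (R x a))"
  shows "leq (cty XX x) (cty A a) h (dsym Q XX A \<Psi> a x)"
  unfolding dsym_val[OF X A adj x a] using leq_meet_gr assms(6,7) .

lemma dsym_distr: assumes X: "qcategory Q XX" and A: "qcategory Q A" and adj: "is_adj Q XX A \<Psi> R"
  shows "distributor Q (symz Q XX) (symz Q A) (dsym Q XX A \<Psi>)"
  unfolding distributor_def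
proof (intro conjI ballI allI impI)
  note adj' = adj[unfolded adj_iff[OF X A]]
  fix x a assume "x \<in> cob (symz Q XX)" "a \<in> cob (symz Q A)"
  then show "dsym Q XX A \<Psi> a x \<in> hom (cty (symz Q XX) x) (cty (symz Q A) a)"
    using dsym_b(5)[OF X A adj] by simp
next
  note adj' = adj[unfolded adj_iff[OF X A]]
  fix x a a' assume "x \<in> cob (symz Q XX)" "a \<in> cob (symz Q A)" "a' \<in> cob (symz Q A)"
  then have x: "x \<in> cob XX" and a: "a \<in> cob A" and a': "a' \<in> cob A" by auto
  let ?x = "cty XX x" and ?a = "cty A a" and ?a' = "cty A a'"
  have o: "?x \<in> obj" "?a \<in> obj" "?a' \<in> obj" using X A x a a' by auto
  have t: "\<Psi> a x \<in> hom ?x ?a" "R x a \<in> hom ?a ?x" "\<Psi> a' x \<in> hom ?x ?a'" "R x a' \<in> hom ?a' ?x"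
    using adj' x a a' by auto
  have s: "chom (symz Q A) a' a \<in> hom ?a ?a'" using A a a' by auto
  have "leq ?x ?a' (chom (symz Q A) a' a \<odot> dsym Q XX A \<Psi> a x) (dsym Q XX A \<Psi> a' x)"
  proof (rule dsym_gr[OF X A adj x a'])
    have "leq ?x ?a' (chom (symz Q A) a' a \<odot> dsym Q XX A \<Psi> a x) (chom A a' a \<odot> \<Psi> a x)"
      by (rule leq_mono2[OF leqI dsym_b(1)[OF X A adj x a]]) (use o s a a' A symz_le1[OF A a a'] in auto)
    also have "leq ?x ?a' \<dots> (\<Psi> a' x)"
      by (rule leqI[OF o(1) o(3) comp_in[OF o(1) o(2) o(3) t(1)] t(3) distr_l[of XX A \<Psi> x a a']])
        (use adj' x a a' A in auto)
    finally show "leq ?x ?a' (chom (symz Q A) a' a \<odot> dsym Q XX A \<Psi> a x) (\<Psi> a' x)" .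
    have "leq ?x ?a' (chom (symz Q A) a' a \<odot> dsym Q XX A \<Psi> a x) (iv (chom A a a') \<odot> iv (R x a))"
      by (rule leq_mono2[OF leqI dsym_b(2)[OF X A adj x a]]) (use o s a a' A symz_le2[OF A a a'] in auto)
    also have "\<dots> = iv (R x a \<odot> chom A a a')"
      using inv_comp[OF o(3) o(2) o(1) _ t(2)] A a a' by simp
    also have "leq ?x ?a' \<dots> (iv (R x a'))"
      by (rule leq_inv[OF leqI[OF o(3) o(1) comp_in[OF o(3) o(2) o(1) _ t(2)] t(4) distr_r[of A XX R a a' x]]])
        (use adj' x a a' A in auto)
    finally show "leq ?x ?a' (chom (symz Q A) a' a \<odot> dsym Q XX A \<Psi> a x) (iv (R x a'))" .
  qed
  then show "chom (symz Q A) a' a \<odot> dsym Q XX A \<Psi> a x \<preceq> dsym Q XX A \<Psi> a' x" by (rule leqD)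
next
  note adj' = adj[unfolded adj_iff[OF X A]]
  fix x x' a assume "x \<in> cob (symz Q XX)" "x' \<in> cob (symz Q XX)" "a \<in> cob (symz Q A)"
  then have x: "x \<in> cob XX" and x': "x' \<in> cob XX" and a: "a \<in> cob A" by auto
  let ?x = "cty XX x" and ?a = "cty A a" and ?x' = "cty XX x'"
  have o: "?x \<in> obj" "?a \<in> obj" "?x' \<in> obj" using X A x a x' by auto
  have t: "\<Psi> a x \<in> hom ?x ?a" "R x a \<in> hom ?a ?x" "\<Psi> a x' \<in> hom ?x' ?a" "R x' a \<in> hom ?a ?x'"
    using adj' x a x' by auto
  have s: "chom (symz Q XX) x x' \<in> hom ?x' ?x" using X x x' by auto
  have "leq ?x' ?a (dsym Q XX A \<Psi> a x \<odot> chom (symz Q XX) x x') (dsym Q XX A \<Psi> a x')"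
  proof (rule dsym_gr[OF X A adj x' a])
    have "leq ?x' ?a (dsym Q XX A \<Psi> a x \<odot> chom (symz Q XX) x x') (\<Psi> a x \<odot> chom XX x x')"
      by (rule leq_mono2[OF dsym_b(1)[OF X A adj x a] leqI]) (use o s x x' X symz_le1[OF X x' x] in auto)
    also have "leq ?x' ?a \<dots> (\<Psi> a x')"
      by (rule leqI[OF o(3) o(2) comp_in[OF o(3) o(1) o(2) _ t(1)] t(3) distr_r[of XX A \<Psi> x x' a]])
        (use adj' x a x' X in auto)
    finally show "leq ?x' ?a (dsym Q XX A \<Psi> a x \<odot> chom (symz Q XX) x x') (\<Psi> a x')" .
    have "leq ?x' ?a (dsym Q XX A \<Psi> a x \<odot> chom (symz Q XX) x x') (iv (R x a) \<odot> iv (chom XX x' x))"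
      by (rule leq_mono2[OF dsym_b(2)[OF X A adj x a] leqI]) (use o s x x' X symz_le2[OF X x' x] in auto)
    also have "\<dots> = iv (chom XX x' x \<odot> R x a)"
      using inv_comp[OF o(2) o(1) o(3) t(2)] X x x' by simp
    also have "leq ?x' ?a \<dots> (iv (R x' a))"
      by (rule leq_inv[OF leqI[OF o(2) o(3) comp_in[OF o(2) o(1) o(3) t(2)] t(4) distr_l[of A XX R a x x']]])
        (use adj' x a x' X in auto)
    finally show "leq ?x' ?a (dsym Q XX A \<Psi> a x \<odot> chom (symz Q XX) x x') (iv (R x' a))" .
  qed
  then show "dsym Q XX A \<Psi> a x \<odot> chom (symz Q XX) x x' \<preceq> dsym Q XX A \<Psi> a x'" by (rule leqD)
next
  fix y x assume "\<not> (y \<in> cob (symz Q A) \<and> x \<in> cob (symz Q XX))"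
  then show "dsym Q XX A \<Psi> y x = undefined" by (auto simp add: dsym_def)
qed

lemma dsym_counit: assumes X: "qcategory Q XX" and A: "qcategory Q A" and adj: "is_adj Q XX A \<Psi> R"
  and x: "x \<in> cob XX" and a: "a \<in> cob A" and a': "a' \<in> cob A"
  shows "dsym Q XX A \<Psi> a' x \<odot> iv (dsym Q XX A \<Psi> a x) \<preceq> chom (symz Q A) a' a"
proof -
  note adj' = adj[unfolded adj_iff[OF X A]]
  let ?x = "cty XX x" and ?a = "cty A a" and ?a' = "cty A a'"
  have o: "?x \<in> obj" "?a \<in> obj" "?a' \<in> obj" using X A x a a' by auto
  have t: "\<Psi> a x \<in> hom ?x ?a" "R x a \<in> hom ?a ?x" "\<Psi> a' x \<in> hom ?x ?a'" "R x a' \<in> hom ?a' ?x"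
    using adj' x a a' by auto
  let ?h = "dsym Q XX A \<Psi> a' x \<odot> iv (dsym Q XX A \<Psi> a x)"
  have "leq ?a ?a' ?h (\<Psi> a' x \<odot> R x a)"
    by (rule leq_mono2[OF dsym_b(1)[OF X A adj x a'] dsym_b(3)[OF X A adj x a]])
  also have "leq ?a ?a' \<dots> (chom A a' a)"
    by (rule leqI[OF o(2) o(3) comp_in[OF o(2) o(1) o(3) t(2) t(3)]]) (use adj' x a a' A in auto)
  finally have 1: "leq ?a ?a' ?h (chom A a' a)" .
  have "leq ?a ?a' ?h (iv (R x a') \<odot> iv (\<Psi> a x))"
    by (rule leq_mono2[OF dsym_b(2)[OF X A adj x a'] dsym_b(4)[OF X A adj x a]])
  also have "\<dots> = iv (\<Psi> a x \<odot> R x a')"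
    using inv_comp[OF o(3) o(1) o(2) t(4) t(1)] by simp
  also have "leq ?a ?a' \<dots> (iv (chom A a a'))"
    by (rule leq_inv[OF leqI[OF o(3) o(2) comp_in[OF o(3) o(1) o(2) t(4) t(1)]]]) (use adj' x a a' A in auto)
  finally have 2: "leq ?a ?a' ?h (iv (chom A a a'))" .
  show ?thesis using leq_meet_gr[OF 1 2] symz_hom[of a A a'] a a' by (simp add: leqD)
qed

end

context iq begin

lemma G: assumes X: "qcategory Q XX" and A: "qcategory Q A" and adj: "is_adj Q XX A \<Psi> R"
  shows "sym_ladj Q (symz Q XX) (symz Q A) (dsym Q XX A \<Psi>) \<longleftrightarrow>
    (\<forall>x\<in>cob XX. \<forall>x'\<in>cob XX. chom (symz Q XX) x' x \<preceq>
        sp (cty XX x) (cty XX x') ((\<lambda>a. iv (dsym Q XX A \<Psi> a x') \<odot> dsym Q XX A \<Psi> a x) ` cob A))"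
proof -
  let ?S = "dsym Q XX A \<Psi>"
  let ?D = "dual Q (symz Q XX) (symz Q A) ?S"
  have d1: "distributor Q (symz Q XX) (symz Q A) ?S" by (rule dsym_distr[OF X A adj])
  have d2: "distributor Q (symz Q A) (symz Q XX) ?D" by (rule dual_distr[OF X A d1])
  have c: "\<forall>x\<in>cob (symz Q XX). \<forall>y\<in>cob (symz Q A). \<forall>y'\<in>cob (symz Q A). ?S y' x \<odot> ?D x y \<preceq> chom (symz Q A) y' y"
    using dsym_counit[OF X A adj] by (simp add: dual_def)
  have u: "sp (cty (symz Q XX) x) (cty (symz Q XX) x') ((\<lambda>y. ?D x' y \<odot> ?S y x) ` cob (symz Q A)) =
     sp (cty XX x) (cty XX x') ((\<lambda>a. iv (?S a x') \<odot> ?S a x) ` cob A)" if "x \<in> cob XX" "x' \<in> cob XX" for x x'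
    using that by (simp add: dual_def)
  show ?thesis unfolding sym_ladj_def adj_iff[OF symz_cat[OF X] symz_cat[OF A]]
    using d1 d2 c u by simp
qed


definition onept :: "('x, 'o, 'm) qcat \<Rightarrow> 'x \<Rightarrow> 'o \<Rightarrow> bool" where
  "onept D d X \<longleftrightarrow> cob D = {d} \<and> cty D d = X \<and> chom D d d = one X"

lemma onept_cat: assumes "X \<in> obj" "onept D d X" shows "qcategory Q D"
  using assms unfolding onept_def qcategory_def by auto

lemma onept_star: "onept (star Q X) () X"
  unfolding onept_def star_def by simp

lemma onept_symz: assumes "X \<in> obj" "onept D d X" shows "chom (symz Q D) d d = one X"
proof -
  have "chom (symz Q D) d d = mt X X (one X) (one X)"
    using assms unfolding onept_def by (simp add: symz_hom)
  also have "\<dots> = one X"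
    by (rule leq_antisym[OF leq_meet1 leq_meet_gr]) (use assms leq_refl in auto)
  finally show ?thesis .
qed

lemma symz_star: assumes "X \<in> obj" shows "symz Q (star Q X) = star Q X"
proof -
  have "mt X X (one X) (iv (one X)) = one X"
    using onept_symz[OF assms onept_star] unfolding star_def by (simp add: symz_hom)
  then show ?thesis unfolding symz_def star_def by simp
qed

lemma onept_adj: assumes X: "X \<in> obj" and D: "onept D d X" and A: "qcategory Q A"
  shows "is_adj Q D A \<Phi> \<Psi> \<longleftrightarrow>
    (\<forall>a\<in>cob A. \<Phi> a d \<in> hom X (cty A a)) \<and> (\<forall>a\<in>cob A. \<Psi> d a \<in> hom (cty A a) X) \<and>
    (\<forall>a\<in>cob A. \<forall>a'\<in>cob A. chom A a' a \<odot> \<Phi> a d \<preceq> \<Phi> a' d) \<and>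
    (\<forall>a\<in>cob A. \<forall>a'\<in>cob A. \<Psi> d a \<odot> chom A a a' \<preceq> \<Psi> d a') \<and>
    (\<forall>y x. \<not> (y \<in> cob A \<and> x = d) \<longrightarrow> \<Phi> y x = undefined) \<and>
    (\<forall>x y. \<not> (x = d \<and> y \<in> cob A) \<longrightarrow> \<Psi> x y = undefined) \<and>
    one X \<preceq> sp X X ((\<lambda>a. \<Psi> d a \<odot> \<Phi> a d) ` cob A) \<and>
    (\<forall>a\<in>cob A. \<forall>b\<in>cob A. \<Phi> b d \<odot> \<Psi> d a \<preceq> chom A b a)"
proof -
  have Dc: "cob D = {d}" "cty D d = X" "chom D d d = one X" using D unfolding onept_def by auto
  have 1: "distributor Q D A \<Phi> \<longleftrightarrow> (\<forall>a\<in>cob A. \<Phi> a d \<in> hom X (cty A a)) \<and>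
    (\<forall>a\<in>cob A. \<forall>a'\<in>cob A. chom A a' a \<odot> \<Phi> a d \<preceq> \<Phi> a' d) \<and>
    (\<forall>y x. \<not> (y \<in> cob A \<and> x = d) \<longrightarrow> \<Phi> y x = undefined)"
    unfolding distributor_def Dc using X A by (auto simp: Dc) (metis A X cat_ty idr refl)
  have 2: "distributor Q A D \<Psi> \<longleftrightarrow> (\<forall>a\<in>cob A. \<Psi> d a \<in> hom (cty A a) X) \<and>
    (\<forall>a\<in>cob A. \<forall>a'\<in>cob A. \<Psi> d a \<odot> chom A a a' \<preceq> \<Psi> d a') \<and>
    (\<forall>x y. \<not> (x = d \<and> y \<in> cob A) \<longrightarrow> \<Psi> x y = undefined)"
    unfolding distributor_def Dc using X A by (auto simp: Dc) (metis A X cat_ty idl refl)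
  show ?thesis unfolding adj_iff[OF onept_cat[OF X D] A] 1 2 Dc using Dc(2,3) by auto
qed

lemma onept_G: assumes X: "X \<in> obj" and D: "onept D d X" and A: "qcategory Q A" and adj: "is_adj Q D A \<Phi> \<Psi>"
  shows "sym_ladj Q (symz Q D) (symz Q A) (dsym Q D A \<Phi>) \<longleftrightarrow>
    one X \<preceq> sp X X ((\<lambda>a. iv (mt X (cty A a) (\<Phi> a d) (iv (\<Psi> d a))) \<odot> mt X (cty A a) (\<Phi> a d) (iv (\<Psi> d a))) ` cob A)"
proof -
  have Dc: "cob D = {d}" "cty D d = X" "chom D d d = one X" using D unfolding onept_def by auto
  have DD: "qcategory Q D" by (rule onept_cat[OF X D])
  have e: "dsym Q D A \<Phi> a d = mt X (cty A a) (\<Phi> a d) (iv (\<Psi> d a))" if "a \<in> cob A" for a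
    using dsym_val[OF DD A adj _ that, of d] Dc by simp
  show ?thesis unfolding G[OF DD A adj] using Dc onept_symz[OF X D] e by simp
qed

end

context iq begin

lemma star_cond: assumes X: "X \<in> obj" and A: "qcategory Q A" and adj: "is_adj Q (star Q X) A \<psi> \<rho>"
  shows "sym_ladj Q (star Q X) (symz Q A) (dsym Q (star Q X) A \<psi>) \<longleftrightarrow>
    one X \<preceq> sp X X ((\<lambda>a. iv (mt X (cty A a) (\<psi> a ()) (iv (\<rho> () a))) \<odot> mt X (cty A a) (\<psi> a ()) (iv (\<rho> () a))) ` cob A)"
  using onept_G[OF X onept_star A adj] symz_star[OF X] by simp

lemma two_three_a: assumes A: "qcategory Q A"
  and H2: "\<forall>X\<in>obj. \<forall>\<psi>. ladj Q (star Q X) A \<psi> \<longrightarrow> sym_ladj Q (star Q X) (symz Q A) (dsym Q (star Q X) A \<psi>)"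
  and XX: "qcategory Q XX" and L: "ladj Q XX A \<Psi>"
  shows "sym_ladj Q (symz Q XX) (symz Q A) (dsym Q XX A \<Psi>)"
proof -
  define R where "R = radj Q XX A \<Psi>"
  have adj: "is_adj Q XX A \<Psi> R" unfolding R_def by (rule radj_adj[OF XX A L])
  note adj' = adj[unfolded adj_iff[OF XX A]]
  let ?S = "dsym Q XX A \<Psi>"
  show ?thesis unfolding G[OF XX A adj]
  proof (intro ballI)
    fix x x' assume x: "x \<in> cob XX" and x': "x' \<in> cob XX"
    let ?X = "cty XX x'" and ?Y = "cty XX x"
    have o: "?X \<in> obj" "?Y \<in> obj" using XX x x' by auto
    define \<psi> where "\<psi> = (\<lambda>a (u::unit). if a \<in> cob A then \<Psi> a x' else undefined)"
    define \<rho> where "\<rho> = (\<lambda>(u::unit) a. if a \<in> cob A then R x' a else undefined)"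
    have SS: "(\<lambda>a. R x' a \<odot> \<Psi> a x') ` cob A \<subseteq> hom ?X ?X"
    proof (rule image_subsetI)
      fix a assume "a \<in> cob A"
      then show "R x' a \<odot> \<Psi> a x' \<in> hom ?X ?X" using adj' x' A XX comp_in[of ?X "cty A a" ?X] by auto
    qed
    have un: "one ?X \<preceq> sp ?X ?X ((\<lambda>a. R x' a \<odot> \<Psi> a x') ` cob A)"
      using leq_trans[OF leqI[OF o(1) o(1) _ _ cat_id[OF XX x']] leqI[of ?X ?X "chom XX x' x'" "sp ?X ?X ((\<lambda>a. R x' a \<odot> \<Psi> a x') ` cob A)"]]
        adj' x' XX o SS by (auto simp: leqD)
    have adj1: "is_adj Q (star Q ?X) A \<psi> \<rho>"
      unfolding onept_adj[OF o(1) onept_star A]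
      using adj' x' un by (auto simp: \<psi>_def \<rho>_def distr_l distr_r)
    then have "ladj Q (star Q ?X) A \<psi>" unfolding ladj_def by blast
    then have "sym_ladj Q (star Q ?X) (symz Q A) (dsym Q (star Q ?X) A \<psi>)" using H2 o by blast
    then have U0: "one ?X \<preceq> sp ?X ?X ((\<lambda>a. iv (mt ?X (cty A a) (\<psi> a ()) (iv (\<rho> () a))) \<odot> mt ?X (cty A a) (\<psi> a ()) (iv (\<rho> () a))) ` cob A)"
      unfolding star_cond[OF o(1) A adj1] .
    have "(\<lambda>a. iv (mt ?X (cty A a) (\<psi> a ()) (iv (\<rho> () a))) \<odot> mt ?X (cty A a) (\<psi> a ()) (iv (\<rho> () a))) ` cob A
        = (\<lambda>a. iv (?S a x') \<odot> ?S a x') ` cob A"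
      using dsym_val[OF XX A adj x'] by (auto simp: \<psi>_def \<rho>_def)
    with U0 have U: "one ?X \<preceq> sp ?X ?X ((\<lambda>a. iv (?S a x') \<odot> ?S a x') ` cob A)" by simp
    have T1: "(\<lambda>a. iv (?S a x') \<odot> ?S a x') ` cob A \<subseteq> hom ?X ?X"
    proof (rule image_subsetI)
      fix a assume "a \<in> cob A"
      then show "iv (?S a x') \<odot> ?S a x' \<in> hom ?X ?X"
        using dsym_b(5)[OF XX A adj x'] A o comp_in[of ?X "cty A a" ?X] by auto
    qed
    have T2: "(\<lambda>a. iv (?S a x') \<odot> ?S a x) ` cob A \<subseteq> hom ?Y ?X"
    proof (rule image_subsetI)
      fix a assume "a \<in> cob A"
      then show "iv (?S a x') \<odot> ?S a x \<in> hom ?Y ?X"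
        using dsym_b(5)[OF XX A adj x'] dsym_b(5)[OF XX A adj x] A o comp_in[of ?Y "cty A a" ?X] by auto
    qed
    have sh: "chom (symz Q XX) x' x \<in> hom ?Y ?X" using XX x x' by auto
    have "chom (symz Q XX) x' x = one ?X \<odot> chom (symz Q XX) x' x" using sh o by simp
    also have "leq ?Y ?X \<dots> (sp ?X ?X ((\<lambda>a. iv (?S a x') \<odot> ?S a x') ` cob A) \<odot> chom (symz Q XX) x' x)"
      by (rule leq_mono_r[OF leqI[OF o(1) o(1) _ _ U] o(2) sh]) (use o T1 in auto)
    also have "leq ?Y ?X \<dots> (sp ?Y ?X ((\<lambda>a. iv (?S a x') \<odot> ?S a x) ` cob A))"
    proof (rule leqI[OF o(2) o(1)])
      show "sp ?X ?X ((\<lambda>a. iv (?S a x') \<odot> ?S a x') ` cob A) \<odot> chom (symz Q XX) x' x \<in> hom ?Y ?X"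
        using comp_in[OF o(2) o(1) o(1) sh sup_in[OF o(1) o(1) T1]] .
      show "sp ?Y ?X ((\<lambda>a. iv (?S a x') \<odot> ?S a x) ` cob A) \<in> hom ?Y ?X" using o T2 by auto
      show "sp ?X ?X ((\<lambda>a. iv (?S a x') \<odot> ?S a x') ` cob A) \<odot> chom (symz Q XX) x' x \<preceq> sp ?Y ?X ((\<lambda>a. iv (?S a x') \<odot> ?S a x) ` cob A)"
      proof (rule sup_comp_le[OF o(2) o(1) o(1) sh T1])
        show "sp ?Y ?X ((\<lambda>a. iv (?S a x') \<odot> ?S a x) ` cob A) \<in> hom ?Y ?X" using o T2 by auto
        fix s assume "s \<in> (\<lambda>a. iv (?S a x') \<odot> ?S a x') ` cob A"
        then obtain a where a: "a \<in> cob A" and s: "s = iv (?S a x') \<odot> ?S a x'" by auto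
        have oa: "cty A a \<in> obj" using A a by auto
        have t: "?S a x' \<in> hom ?X (cty A a)" "?S a x \<in> hom ?Y (cty A a)"
          using dsym_b(5)[OF XX A adj] x x' a by auto
        have "s \<odot> chom (symz Q XX) x' x = iv (?S a x') \<odot> (?S a x' \<odot> chom (symz Q XX) x' x)"
          using s assoc[OF o(2) o(1) oa o(1) sh t(1) inv_in[OF o(1) oa t(1)]] by simp
        also have "leq ?Y ?X \<dots> (iv (?S a x') \<odot> ?S a x)"
          by (rule leq_mono_l[OF leqI[OF o(2) oa comp_in[OF o(2) o(1) oa sh t(1)] t(2)] o(1) inv_in[OF o(1) oa t(1)]])
            (use distr_r[OF dsym_distr[OF XX A adj], of x' x a] x x' a in auto)
        also have "leq ?Y ?X \<dots> (sp ?Y ?X ((\<lambda>a. iv (?S a x') \<odot> ?S a x) ` cob A))"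
          using leq_sup_ub[OF o(2) o(1) T2] a by auto
        finally show "s \<odot> chom (symz Q XX) x' x \<preceq> sp ?Y ?X ((\<lambda>a. iv (?S a x') \<odot> ?S a x) ` cob A)" by (rule leqD)
      qed
    qed
    finally show "chom (symz Q XX) x' x \<preceq> sp ?Y ?X ((\<lambda>a. iv (?S a x') \<odot> ?S a x) ` cob A)" by (rule leqD)
  qed
qed


lemma two_three_b: assumes A: "qcategory Q A"
  and H3: "\<forall>XX :: ('x, 'o, 'm) qcat. qcategory Q XX \<longrightarrow> (\<forall>\<Psi>. ladj Q XX A \<Psi> \<longrightarrow> sym_ladj Q (symz Q XX) (symz Q A) (dsym Q XX A \<Psi>))"
  and X: "X \<in> obj" and L: "ladj Q (star Q X) A \<psi>"
  shows "sym_ladj Q (star Q X) (symz Q A) (dsym Q (star Q X) A \<psi>)"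
proof -
  define \<rho> where "\<rho> = radj Q (star Q X) A \<psi>"
  have adj1: "is_adj Q (star Q X) A \<psi> \<rho>" unfolding \<rho>_def by (rule radj_adj[OF onept_cat[OF X onept_star] A L])
  define c where "c = (undefined :: 'x)"
  define XX1 :: "('x, 'o, 'm) qcat" where "XX1 = \<lparr> cob = {c}, cty = (\<lambda>_. X), chom = (\<lambda>_ _. one X) \<rparr>"
  have D1: "onept XX1 c X" unfolding onept_def XX1_def by simp
  define \<Psi> where "\<Psi> = (\<lambda>a x. if a \<in> cob A \<and> x = c then \<psi> a () else undefined)"
  define R where "R = (\<lambda>x a. if x = c \<and> a \<in> cob A then \<rho> () a else undefined)"
  have im: "(\<lambda>a. R c a \<odot> \<Psi> a c) ` cob A = (\<lambda>a. \<rho> () a \<odot> \<psi> a ()) ` cob A"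
    by (auto simp: R_def \<Psi>_def)
  have adj2: "is_adj Q XX1 A \<Psi> R"
    unfolding onept_adj[OF X D1 A] im using adj1[unfolded onept_adj[OF X onept_star A]]
    by (auto simp: R_def \<Psi>_def)
  have "sym_ladj Q (symz Q XX1) (symz Q A) (dsym Q XX1 A \<Psi>)"
    using H3 onept_cat[OF X D1] adj2 unfolding ladj_def by blast
  then have U: "one X \<preceq> sp X X ((\<lambda>a. iv (mt X (cty A a) (\<Psi> a c) (iv (R c a))) \<odot> mt X (cty A a) (\<Psi> a c) (iv (R c a))) ` cob A)"
    unfolding onept_G[OF X D1 A adj2] .
  have "(\<lambda>a. iv (mt X (cty A a) (\<Psi> a c) (iv (R c a))) \<odot> mt X (cty A a) (\<Psi> a c) (iv (R c a))) ` cob A =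
     (\<lambda>a. iv (mt X (cty A a) (\<psi> a ()) (iv (\<rho> () a))) \<odot> mt X (cty A a) (\<psi> a ()) (iv (\<rho> () a))) ` cob A"
    by (auto simp: R_def \<Psi>_def)
  with U show ?thesis unfolding star_cond[OF X A adj1] by simp
qed

lemma two_three: assumes A: "qcategory Q A"
  shows "(\<forall>X\<in>obj. \<forall>\<psi>. ladj Q (star Q X) A \<psi> \<longrightarrow> sym_ladj Q (star Q X) (symz Q A) (dsym Q (star Q X) A \<psi>))
    \<longleftrightarrow> (\<forall>XX :: ('x, 'o, 'm) qcat. qcategory Q XX \<longrightarrow> (\<forall>\<Psi>. ladj Q XX A \<Psi> \<longrightarrow> sym_ladj Q (symz Q XX) (symz Q A) (dsym Q XX A \<Psi>)))"
  using two_three_a[OF A] two_three_b[OF A] by blast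

end

context iq begin

lemma sym_star_D: assumes X: "X \<in> obj" and A: "qcategory Q A" and S: "sym_ladj Q (star Q X) (symz Q A) \<phi>"
  shows "\<And>a. a \<in> cob A \<Longrightarrow> \<phi> a () \<in> hom X (cty A a)"
    "\<And>a a'. a \<in> cob A \<Longrightarrow> a' \<in> cob A \<Longrightarrow> chom (symz Q A) a' a \<odot> \<phi> a () \<preceq> \<phi> a' ()"
    "\<And>a u. a \<notin> cob A \<Longrightarrow> \<phi> a u = undefined"
    "one X \<preceq> sp X X ((\<lambda>a. iv (\<phi> a ()) \<odot> \<phi> a ()) ` cob A)"
    "\<And>a b. a \<in> cob A \<Longrightarrow> b \<in> cob A \<Longrightarrow> \<phi> b () \<odot> iv (\<phi> a ()) \<preceq> chom (symz Q A) b a"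
proof -
  have SA: "qcategory Q (symz Q A)" by (rule symz_cat[OF A])
  note S' = S[unfolded sym_ladj_def onept_adj[OF X onept_star SA]]
  have im: "(\<lambda>a. dual Q (star Q X) (symz Q A) \<phi> () a \<odot> \<phi> a ()) ` cob (symz Q A) = (\<lambda>a. iv (\<phi> a ()) \<odot> \<phi> a ()) ` cob A"
    by (auto simp: dual_def star_def)
  show "\<And>a. a \<in> cob A \<Longrightarrow> \<phi> a () \<in> hom X (cty A a)"
    "\<And>a a'. a \<in> cob A \<Longrightarrow> a' \<in> cob A \<Longrightarrow> chom (symz Q A) a' a \<odot> \<phi> a () \<preceq> \<phi> a' ()"
    "\<And>a u. a \<notin> cob A \<Longrightarrow> \<phi> a u = undefined"
    using S' by auto
  show "one X \<preceq> sp X X ((\<lambda>a. iv (\<phi> a ()) \<odot> \<phi> a ()) ` cob A)" using S' im by simp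
  show "\<And>a b. a \<in> cob A \<Longrightarrow> b \<in> cob A \<Longrightarrow> \<phi> b () \<odot> iv (\<phi> a ()) \<preceq> chom (symz Q A) b a"
    using S' by (auto simp: dual_def star_def)
qed

definition Lp :: "('a, 'o, 'm) qcat \<Rightarrow> 'o \<Rightarrow> ('a \<Rightarrow> unit \<Rightarrow> 'm) \<Rightarrow> ('a \<Rightarrow> unit \<Rightarrow> 'm)" where
  "Lp A X \<phi> = (\<lambda>a u. if a \<in> cob A then sp X (cty A a) ((\<lambda>b. chom A a b \<odot> \<phi> b ()) ` cob A) else undefined)"
definition Rp :: "('a, 'o, 'm) qcat \<Rightarrow> 'o \<Rightarrow> ('a \<Rightarrow> unit \<Rightarrow> 'm) \<Rightarrow> (unit \<Rightarrow> 'a \<Rightarrow> 'm)" where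
  "Rp A X \<phi> = (\<lambda>u a. if a \<in> cob A then sp (cty A a) X ((\<lambda>c. iv (\<phi> c ()) \<odot> chom A c a) ` cob A) else undefined)"

lemma Lfun_eq: "Lfun Q A (X, \<phi>) = (X, Lp A X \<phi>)"
  unfolding Lfun_def Lp_def dcomp_def star_def by (auto intro!: ext)


context
  fixes A :: "('a, 'o, 'm) qcat" and X :: 'o and \<phi> :: "'a \<Rightarrow> unit \<Rightarrow> 'm"
  assumes X: "X \<in> obj" and A: "qcategory Q A" and S: "sym_ladj Q (star Q X) (symz Q A) \<phi>"
begin

lemmas sd = sym_star_D[OF X A S]

lemma ty_phi: "a \<in> cob A \<Longrightarrow> \<phi> a () \<in> hom X (cty A a)" by (rule sd(1))

lemma SL: assumes a: "a \<in> cob A" shows "(\<lambda>b. chom A a b \<odot> \<phi> b ()) ` cob A \<subseteq> hom X (cty A a)"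
proof (rule image_subsetI)
  fix b assume "b \<in> cob A"
  then show "chom A a b \<odot> \<phi> b () \<in> hom X (cty A a)" using a A X ty_phi comp_in[of X "cty A b" "cty A a"] by auto
qed

lemma SR: assumes a: "a \<in> cob A" shows "(\<lambda>c. iv (\<phi> c ()) \<odot> chom A c a) ` cob A \<subseteq> hom (cty A a) X"
proof (rule image_subsetI)
  fix c assume "c \<in> cob A"
  then show "iv (\<phi> c ()) \<odot> chom A c a \<in> hom (cty A a) X" using a A X ty_phi comp_in[of "cty A a" "cty A c" X] by auto
qed

lemma L_val: "a \<in> cob A \<Longrightarrow> Lp A X \<phi> a u = sp X (cty A a) ((\<lambda>b. chom A a b \<odot> \<phi> b ()) ` cob A)"
  by (simp add: Lp_def)
lemma R_val: "a \<in> cob A \<Longrightarrow> Rp A X \<phi> u a = sp (cty A a) X ((\<lambda>c. iv (\<phi> c ()) \<odot> chom A c a) ` cob A)"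
  by (simp add: Rp_def)
lemma L_in: "a \<in> cob A \<Longrightarrow> Lp A X \<phi> a u \<in> hom X (cty A a)"
  using L_val SL X A by simp
lemma R_in: "a \<in> cob A \<Longrightarrow> Rp A X \<phi> u a \<in> hom (cty A a) X"
  using R_val SR X A by simp

lemma phi_le_L: assumes a: "a \<in> cob A" shows "leq X (cty A a) (\<phi> a ()) (Lp A X \<phi> a ())"
proof -
  have o: "cty A a \<in> obj" using A a by simp
  have "\<phi> a () = one (cty A a) \<odot> \<phi> a ()" using ty_phi[OF a] o X by simp
  also have "leq X (cty A a) \<dots> (chom A a a \<odot> \<phi> a ())"
    by (rule leq_mono_r[OF leqI[OF o o _ _ cat_id[OF A a]] X ty_phi[OF a]]) (use A a o in auto)
  also have "leq X (cty A a) \<dots> (Lp A X \<phi> a ())"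
    unfolding L_val[OF a] by (rule leq_sup_ub[OF X o SL[OF a]]) (use a in auto)
  finally show ?thesis .
qed

lemma iphi_le_R: assumes a: "a \<in> cob A" shows "leq (cty A a) X (iv (\<phi> a ())) (Rp A X \<phi> () a)"
proof -
  have o: "cty A a \<in> obj" using A a by simp
  have i: "iv (\<phi> a ()) \<in> hom (cty A a) X" using ty_phi[OF a] o X by simp
  have "iv (\<phi> a ()) = iv (\<phi> a ()) \<odot> one (cty A a)" using i o X by simp
  also have "leq (cty A a) X \<dots> (iv (\<phi> a ()) \<odot> chom A a a)"
    by (rule leq_mono_l[OF leqI[OF o o _ _ cat_id[OF A a]] X i]) (use A a o in auto)
  also have "leq (cty A a) X \<dots> (Rp A X \<phi> () a)"
    unfolding R_val[OF a] by (rule leq_sup_ub[OF o X SR[OF a]]) (use a in auto)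
  finally show ?thesis .
qed

lemma K: assumes b: "b \<in> cob A" and c: "c \<in> cob A"
  shows "leq (cty A c) (cty A b) (Lp A X \<phi> b () \<odot> iv (\<phi> c ())) (chom A b c)"
proof -
  have ob: "cty A b \<in> obj" and oc: "cty A c \<in> obj" using A b c by auto
  have i: "iv (\<phi> c ()) \<in> hom (cty A c) X" using ty_phi[OF c] oc X by simp
  show ?thesis
  proof (rule leqI[OF oc ob comp_in[OF oc X ob i L_in[OF b]]])
    show "chom A b c \<in> hom (cty A c) (cty A b)" using A b c by simp
    show "Lp A X \<phi> b () \<odot> iv (\<phi> c ()) \<preceq> chom A b c"
      unfolding L_val[OF b]
    proof (rule sup_comp_le[OF oc X ob i SL[OF b]])
      show "chom A b c \<in> hom (cty A c) (cty A b)" using A b c by simp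
      fix s assume "s \<in> (\<lambda>d. chom A b d \<odot> \<phi> d ()) ` cob A"
      then obtain d where d: "d \<in> cob A" and s: "s = chom A b d \<odot> \<phi> d ()" by auto
      have od: "cty A d \<in> obj" using A d by simp
      have "s \<odot> iv (\<phi> c ()) = chom A b d \<odot> (\<phi> d () \<odot> iv (\<phi> c ()))"
        using s assoc[OF oc X od ob i ty_phi[OF d]] A b d by simp
      also have "leq (cty A c) (cty A b) \<dots> (chom A b d \<odot> chom (symz Q A) d c)"
        by (rule leq_mono_l[OF leqI[OF oc od comp_in[OF oc X od i ty_phi[OF d]] _ sd(5)[OF c d]] ob])
          (use A b c d in auto)
      also have "leq (cty A c) (cty A b) \<dots> (chom A b d \<odot> chom A d c)"
        by (rule leq_mono_l[OF leqI[OF oc od _ _ symz_le1[OF A c d]] ob]) (use A b c d in auto)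
      also have "leq (cty A c) (cty A b) \<dots> (chom A b c)"
        by (rule leq_cat[OF A c d b])
      finally show "s \<odot> iv (\<phi> c ()) \<preceq> chom A b c" by (rule leqD)
    qed
  qed
qed


lemma L_act: assumes a: "a \<in> cob A" and a': "a' \<in> cob A"
  shows "chom A a' a \<odot> Lp A X \<phi> a () \<preceq> Lp A X \<phi> a' ()"
proof -
  have oa: "cty A a \<in> obj" and oa': "cty A a' \<in> obj" using A a a' by auto
  have h: "chom A a' a \<in> hom (cty A a) (cty A a')" using A a a' by simp
  show ?thesis unfolding L_val[OF a] L_val[OF a']
  proof (rule comp_sup_le[OF X oa oa' h SL[OF a]])
    show "sp X (cty A a') ((\<lambda>b. chom A a' b \<odot> \<phi> b ()) ` cob A) \<in> hom X (cty A a')" using SL[OF a'] X oa' by simp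
    fix s assume "s \<in> (\<lambda>b. chom A a b \<odot> \<phi> b ()) ` cob A"
    then obtain b where b: "b \<in> cob A" and s: "s = chom A a b \<odot> \<phi> b ()" by auto
    have ob: "cty A b \<in> obj" using A b by simp
    have "chom A a' a \<odot> s = (chom A a' a \<odot> chom A a b) \<odot> \<phi> b ()"
      using s assoc[OF X ob oa oa' ty_phi[OF b] _ h] A a b by simp
    also have "leq X (cty A a') \<dots> (chom A a' b \<odot> \<phi> b ())"
      by (rule leq_mono_r[OF leq_cat[OF A b a a'] X ty_phi[OF b]])
    also have "leq X (cty A a') \<dots> (sp X (cty A a') ((\<lambda>b. chom A a' b \<odot> \<phi> b ()) ` cob A))"
      by (rule leq_sup_ub[OF X oa' SL[OF a']]) (use b in auto)
    finally show "chom A a' a \<odot> s \<preceq> sp X (cty A a') ((\<lambda>b. chom A a' b \<odot> \<phi> b ()) ` cob A)" by (rule leqD)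
  qed
qed

lemma R_act: assumes a: "a \<in> cob A" and a': "a' \<in> cob A"
  shows "Rp A X \<phi> () a \<odot> chom A a a' \<preceq> Rp A X \<phi> () a'"
proof -
  have oa: "cty A a \<in> obj" and oa': "cty A a' \<in> obj" using A a a' by auto
  have h: "chom A a a' \<in> hom (cty A a') (cty A a)" using A a a' by simp
  show ?thesis unfolding R_val[OF a] R_val[OF a']
  proof (rule sup_comp_le[OF oa' oa X h SR[OF a]])
    show "sp (cty A a') X ((\<lambda>c. iv (\<phi> c ()) \<odot> chom A c a') ` cob A) \<in> hom (cty A a') X" using SR[OF a'] X oa' by simp
    fix s assume "s \<in> (\<lambda>c. iv (\<phi> c ()) \<odot> chom A c a) ` cob A"
    then obtain c where c: "c \<in> cob A" and s: "s = iv (\<phi> c ()) \<odot> chom A c a" by auto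
    have oc: "cty A c \<in> obj" using A c by simp
    have i: "iv (\<phi> c ()) \<in> hom (cty A c) X" using ty_phi[OF c] oc X by simp
    have "s \<odot> chom A a a' = iv (\<phi> c ()) \<odot> (chom A c a \<odot> chom A a a')"
      using s assoc[OF oa' oa oc X h _ i] A a c by simp
    also have "leq (cty A a') X \<dots> (iv (\<phi> c ()) \<odot> chom A c a')"
      by (rule leq_mono_l[OF leq_cat[OF A a' a c] X i])
    also have "leq (cty A a') X \<dots> (sp (cty A a') X ((\<lambda>c. iv (\<phi> c ()) \<odot> chom A c a') ` cob A))"
      by (rule leq_sup_ub[OF oa' X SR[OF a']]) (use c in auto)
    finally show "s \<odot> chom A a a' \<preceq> sp (cty A a') X ((\<lambda>c. iv (\<phi> c ()) \<odot> chom A c a') ` cob A)" by (rule leqD)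
  qed
qed

lemma LR_unit: "one X \<preceq> sp X X ((\<lambda>a. Rp A X \<phi> () a \<odot> Lp A X \<phi> a ()) ` cob A)"
proof -
  have T1: "(\<lambda>a. iv (\<phi> a ()) \<odot> \<phi> a ()) ` cob A \<subseteq> hom X X"
  proof (rule image_subsetI)
    fix a assume a: "a \<in> cob A"
    then show "iv (\<phi> a ()) \<odot> \<phi> a () \<in> hom X X" using comp_in[OF X _ X ty_phi[OF a], of "iv (\<phi> a ())"] A X ty_phi[OF a] by simp
  qed
  have T2: "(\<lambda>a. Rp A X \<phi> () a \<odot> Lp A X \<phi> a ()) ` cob A \<subseteq> hom X X"
  proof (rule image_subsetI)
    fix a assume a: "a \<in> cob A"
    then show "Rp A X \<phi> () a \<odot> Lp A X \<phi> a () \<in> hom X X" using comp_in[OF X _ X L_in[OF a] R_in[OF a]] A by simp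
  qed
  have "leq X X (one X) (sp X X ((\<lambda>a. iv (\<phi> a ()) \<odot> \<phi> a ()) ` cob A))"
    using leqI[OF X X _ _ sd(4)] T1 X by simp
  also have "leq X X \<dots> (sp X X ((\<lambda>a. Rp A X \<phi> () a \<odot> Lp A X \<phi> a ()) ` cob A))"
  proof (rule leq_sup_mono[OF X X T1 T2])
    fix s assume "s \<in> (\<lambda>a. iv (\<phi> a ()) \<odot> \<phi> a ()) ` cob A"
    then obtain a where a: "a \<in> cob A" and s: "s = iv (\<phi> a ()) \<odot> \<phi> a ()" by auto
    have "s \<preceq> Rp A X \<phi> () a \<odot> Lp A X \<phi> a ()"
      using leqD(1)[OF leq_mono2[OF iphi_le_R[OF a] phi_le_L[OF a]]] s by simp
    then show "\<exists>t\<in>(\<lambda>a. Rp A X \<phi> () a \<odot> Lp A X \<phi> a ()) ` cob A. s \<preceq> t" using a by blast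
  qed
  finally show ?thesis by (rule leqD)
qed

lemma LR_counit: assumes a: "a \<in> cob A" and b: "b \<in> cob A"
  shows "Lp A X \<phi> b () \<odot> Rp A X \<phi> () a \<preceq> chom A b a"
proof -
  have oa: "cty A a \<in> obj" and ob: "cty A b \<in> obj" using A a b by auto
  show ?thesis unfolding R_val[OF a]
  proof (rule comp_sup_le[OF oa X ob L_in[OF b] SR[OF a]])
    show "chom A b a \<in> hom (cty A a) (cty A b)" using A a b by simp
    fix s assume "s \<in> (\<lambda>c. iv (\<phi> c ()) \<odot> chom A c a) ` cob A"
    then obtain c where c: "c \<in> cob A" and s: "s = iv (\<phi> c ()) \<odot> chom A c a" by auto
    have oc: "cty A c \<in> obj" using A c by simp
    have i: "iv (\<phi> c ()) \<in> hom (cty A c) X" using ty_phi[OF c] oc X by simp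
    have "Lp A X \<phi> b () \<odot> s = (Lp A X \<phi> b () \<odot> iv (\<phi> c ())) \<odot> chom A c a"
      using s assoc[OF oa oc X ob _ i L_in[OF b]] A a c by simp
    also have "leq (cty A a) (cty A b) \<dots> (chom A b c \<odot> chom A c a)"
      by (rule leq_mono_r[OF K[OF b c] oa]) (use A a c in simp)
    also have "leq (cty A a) (cty A b) \<dots> (chom A b a)" by (rule leq_cat[OF A a c b])
    finally show "Lp A X \<phi> b () \<odot> s \<preceq> chom A b a" by (rule leqD)
  qed
qed

lemma P1: "is_adj Q (star Q X) A (Lp A X \<phi>) (Rp A X \<phi>)"
  unfolding onept_adj[OF X onept_star A]
  using L_in R_in L_act R_act LR_unit LR_counit by (auto simp: Lp_def Rp_def)


lemma star_cat: "qcategory Q (star Q X)" by (rule onept_cat[OF X onept_star])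

lemma P2pt: assumes a: "a \<in> cob A"
  shows "mt X (cty A a) (Lp A X \<phi> a ()) (iv (Rp A X \<phi> () a)) = \<phi> a ()"
proof -
  have oa: "cty A a \<in> obj" using A a by simp
  let ?m = "mt X (cty A a) (Lp A X \<phi> a ()) (iv (Rp A X \<phi> () a))"
  have mi: "?m \<in> hom X (cty A a)" using X oa by simp
  have g: "leq X (cty A a) (\<phi> a ()) ?m"
    by (rule leq_meet_gr[OF phi_le_L[OF a]]) (use leq_inv[OF iphi_le_R[OF a]] ty_phi[OF a] X oa in simp)
  have T1: "(\<lambda>c. iv (\<phi> c ()) \<odot> \<phi> c ()) ` cob A \<subseteq> hom X X"
  proof (rule image_subsetI)
    fix c assume c: "c \<in> cob A"
    then show "iv (\<phi> c ()) \<odot> \<phi> c () \<in> hom X X" using comp_in[OF X _ X ty_phi[OF c], of "iv (\<phi> c ())"] A X ty_phi[OF c] by simp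
  qed
  have "?m = ?m \<odot> one X" using mi X oa by simp
  also have "leq X (cty A a) \<dots> (?m \<odot> sp X X ((\<lambda>c. iv (\<phi> c ()) \<odot> \<phi> c ()) ` cob A))"
    by (rule leq_mono_l[OF leqI[OF X X _ _ sd(4)] oa mi]) (use T1 X in auto)
  also have "leq X (cty A a) \<dots> (\<phi> a ())"
  proof (rule leqI[OF X oa comp_in[OF X X oa sup_in[OF X X T1] mi] ty_phi[OF a]])
    show "?m \<odot> sp X X ((\<lambda>c. iv (\<phi> c ()) \<odot> \<phi> c ()) ` cob A) \<preceq> \<phi> a ()"
    proof (rule comp_sup_le[OF X X oa mi T1 ty_phi[OF a]])
      fix s assume "s \<in> (\<lambda>c. iv (\<phi> c ()) \<odot> \<phi> c ()) ` cob A"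
      then obtain c where c: "c \<in> cob A" and s: "s = iv (\<phi> c ()) \<odot> \<phi> c ()" by auto
      have oc: "cty A c \<in> obj" using A c by simp
      have i: "iv (\<phi> c ()) \<in> hom (cty A c) X" using ty_phi[OF c] oc X by simp
      have mc: "?m \<odot> iv (\<phi> c ()) \<in> hom (cty A c) (cty A a)" using comp_in[OF oc X oa i mi] .
      have 1: "leq (cty A c) (cty A a) (?m \<odot> iv (\<phi> c ())) (chom A a c)"
        using leq_trans[OF leq_mono_r[OF leq_meet1[OF X oa L_in[OF a]] oc i] K[OF a c]] .
      have "leq (cty A c) (cty A a) (?m \<odot> iv (\<phi> c ())) (iv (Rp A X \<phi> () a) \<odot> iv (\<phi> c ()))"
        by (rule leq_mono_r[OF leq_meet2[OF X oa] oc i]) (use R_in[OF a] X oa in simp)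
      also have "\<dots> = iv (\<phi> c () \<odot> Rp A X \<phi> () a)"
        using inv_comp[OF oa X oc R_in[OF a] ty_phi[OF c]] by simp
      also have "leq (cty A c) (cty A a) \<dots> (iv (Lp A X \<phi> c () \<odot> Rp A X \<phi> () a))"
        by (rule leq_inv[OF leq_mono_r[OF phi_le_L[OF c] oa R_in[OF a]]])
      also have "leq (cty A c) (cty A a) \<dots> (iv (chom A c a))"
        by (rule leq_inv[OF leqI[OF oa oc comp_in[OF oa X oc R_in[OF a] L_in[OF c]] _ LR_counit[OF a c]]]) (use A a c in simp)
      finally have 2: "leq (cty A c) (cty A a) (?m \<odot> iv (\<phi> c ())) (iv (chom A c a))" .
      have 3: "leq (cty A c) (cty A a) (?m \<odot> iv (\<phi> c ())) (chom (symz Q A) a c)"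
        using symz_gr[OF A c a mc leqD(1)[OF 1] leqD(1)[OF 2]] mc oa oc A a c by (intro leqI) auto
      have "?m \<odot> s = (?m \<odot> iv (\<phi> c ())) \<odot> \<phi> c ()"
        using s assoc[OF X oc X oa ty_phi[OF c] i mi] by simp
      also have "leq X (cty A a) \<dots> (chom (symz Q A) a c \<odot> \<phi> c ())"
        by (rule leq_mono_r[OF 3 X ty_phi[OF c]])
      also have "leq X (cty A a) \<dots> (\<phi> a ())"
        by (rule leqI[OF X oa _ ty_phi[OF a] sd(2)[OF c a]]) (use comp_in[OF X oc oa ty_phi[OF c]] A a c in simp)
      finally show "?m \<odot> s \<preceq> \<phi> a ()" by (rule leqD)
    qed
  qed
  finally have "leq X (cty A a) ?m (\<phi> a ())" .
  then show ?thesis using g by (rule leq_antisym)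
qed

lemma P2: "dsym Q (star Q X) A (Lp A X \<phi>) = \<phi>"
proof (intro ext)
  fix a u
  show "dsym Q (star Q X) A (Lp A X \<phi>) a u = \<phi> a u"
  proof (cases "a \<in> cob A")
    case True
    then show ?thesis using dsym_val[OF star_cat A P1 _ True, of u] P2pt[OF True] by (simp add: star_def)
  next
    case False
    then show ?thesis using sd(3)[OF False] by (simp add: dsym_def)
  qed
qed

end

end

context iq begin

lemma star_simps[simp]: "cob (star Q X) = {()}" "cty (star Q X) u = X" "chom (star Q X) u v = one X"
  by (simp_all add: star_def)

lemma P3: assumes X: "X \<in> obj" and A: "qcategory Q A" and adj: "is_adj Q (star Q X) A \<psi> \<rho>"
  and S: "sym_ladj Q (star Q X) (symz Q A) (dsym Q (star Q X) A \<psi>)"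
  shows "Lp A X (dsym Q (star Q X) A \<psi>) = \<psi>"
proof -
  let ?s = "dsym Q (star Q X) A \<psi>"
  have SC: "qcategory Q (star Q X)" by (rule onept_cat[OF X onept_star])
  note adj' = adj[unfolded onept_adj[OF X onept_star A]]
  note sd = sym_star_D[OF X A S]
  have b1: "\<And>b. b \<in> cob A \<Longrightarrow> leq X (cty A b) (?s b ()) (\<psi> b ())" using dsym_b(1)[OF SC A adj] by simp
  have b3: "\<And>b. b \<in> cob A \<Longrightarrow> leq (cty A b) X (iv (?s b ())) (\<rho> () b)" using dsym_b(3)[OF SC A adj] by simp
  have pt: "Lp A X ?s a () = \<psi> a ()" if a: "a \<in> cob A" for a
  proof -
    have oa: "cty A a \<in> obj" using A a by simp
    have pa: "\<psi> a () \<in> hom X (cty A a)" using adj' a by simp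
    have T: "(\<lambda>b. chom A a b \<odot> ?s b ()) ` cob A \<subseteq> hom X (cty A a)" by (rule SL[OF X A S a])
    have T1: "(\<lambda>c. iv (?s c ()) \<odot> ?s c ()) ` cob A \<subseteq> hom X X"
    proof (rule image_subsetI)
      fix c assume c: "c \<in> cob A"
      then show "iv (?s c ()) \<odot> ?s c () \<in> hom X X"
        using comp_in[OF X _ X sd(1)[OF c], of "iv (?s c ())"] A X sd(1)[OF c] by simp
    qed
    have "leq X (cty A a) (Lp A X ?s a ()) (\<psi> a ())"
      unfolding L_val[OF X A S a]
    proof (rule leq_sup_least[OF X oa T pa])
      fix s assume "s \<in> (\<lambda>b. chom A a b \<odot> ?s b ()) ` cob A"
      then obtain b where b: "b \<in> cob A" and s: "s = chom A a b \<odot> ?s b ()" by auto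
      have "leq X (cty A a) s (chom A a b \<odot> \<psi> b ())"
        unfolding s by (rule leq_mono_l[OF b1[OF b] oa]) (use A a b in simp)
      also have "leq X (cty A a) \<dots> (\<psi> a ())"
        by (rule leqI[OF X oa comp_in[OF X _ oa _ _] pa]) (use adj' A a b in auto)
      finally show "s \<preceq> \<psi> a ()" by (rule leqD)
    qed
    moreover have "leq X (cty A a) (\<psi> a ()) (Lp A X ?s a ())"
    proof -
      have "\<psi> a () = \<psi> a () \<odot> one X" using pa X oa by simp
      also have "leq X (cty A a) \<dots> (\<psi> a () \<odot> sp X X ((\<lambda>c. iv (?s c ()) \<odot> ?s c ()) ` cob A))"
        by (rule leq_mono_l[OF leqI[OF X X _ _ sd(4)] oa pa]) (use T1 X in auto)
      also have "leq X (cty A a) \<dots> (Lp A X ?s a ())"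
      proof (rule leqI[OF X oa comp_in[OF X X oa sup_in[OF X X T1] pa] L_in[OF X A S a]])
        show "\<psi> a () \<odot> sp X X ((\<lambda>c. iv (?s c ()) \<odot> ?s c ()) ` cob A) \<preceq> Lp A X ?s a ()"
        proof (rule comp_sup_le[OF X X oa pa T1 L_in[OF X A S a]])
          fix s assume "s \<in> (\<lambda>c. iv (?s c ()) \<odot> ?s c ()) ` cob A"
          then obtain b where b: "b \<in> cob A" and s: "s = iv (?s b ()) \<odot> ?s b ()" by auto
          have ob: "cty A b \<in> obj" using A b by simp
          have i: "iv (?s b ()) \<in> hom (cty A b) X" using sd(1)[OF b] ob X by simp
          have rb: "\<rho> () b \<in> hom (cty A b) X" using adj' b by simp
          have "\<psi> a () \<odot> s = (\<psi> a () \<odot> iv (?s b ())) \<odot> ?s b ()"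
            using s assoc[OF X ob X oa sd(1)[OF b] i pa] by simp
          also have "leq X (cty A a) \<dots> ((\<psi> a () \<odot> \<rho> () b) \<odot> ?s b ())"
            by (rule leq_mono_r[OF leq_mono_l[OF b3[OF b] oa pa] X sd(1)[OF b]])
          also have "leq X (cty A a) \<dots> (chom A a b \<odot> ?s b ())"
            by (rule leq_mono_r[OF leqI[OF ob oa comp_in[OF ob X oa rb pa]] X sd(1)[OF b]])
              (use adj' A a b in auto)
          also have "leq X (cty A a) \<dots> (Lp A X ?s a ())"
            unfolding L_val[OF X A S a] by (rule leq_sup_ub[OF X oa T]) (use b in auto)
          finally show "\<psi> a () \<odot> s \<preceq> Lp A X ?s a ()" by (rule leqD)
        qed
      qed
      finally show ?thesis .
    qed
    ultimately show ?thesis by (rule leq_antisym)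
  qed
  show ?thesis
  proof (intro ext)
    fix a u
    show "Lp A X ?s a u = \<psi> a u"
    proof (cases "a \<in> cob A")
      case True
      then show ?thesis using pt by simp
    next
      case False
      then show ?thesis using adj' by (simp add: Lp_def)
    qed
  qed
qed


lemma P5: assumes X: "X \<in> obj" and X': "X' \<in> obj" and A: "qcategory Q A"
  and S: "sym_ladj Q (star Q X) (symz Q A) \<phi>" and S': "sym_ladj Q (star Q X') (symz Q A) \<phi>'"
  shows "mt X X' (sp X X' ((\<lambda>y. Rp A X' \<phi>' () y \<odot> Lp A X \<phi> y ()) ` cob A))
           (iv (sp X' X ((\<lambda>y. Rp A X \<phi> () y \<odot> Lp A X' \<phi>' y ()) ` cob A)))
       = sp X X' ((\<lambda>y. iv (\<phi>' y ()) \<odot> \<phi> y ()) ` cob A)"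
proof -
  let ?L = "Lp A X \<phi>" and ?R = "Rp A X \<phi>" and ?L' = "Lp A X' \<phi>'" and ?R' = "Rp A X' \<phi>'"
  let ?T1 = "(\<lambda>y. ?R' () y \<odot> ?L y ()) ` cob A"
  let ?T2 = "(\<lambda>y. ?R () y \<odot> ?L' y ()) ` cob A"
  let ?T = "(\<lambda>y. iv (\<phi>' y ()) \<odot> \<phi> y ()) ` cob A"
  note sd = sym_star_D[OF X A S] and sd' = sym_star_D[OF X' A S']
  have T1: "?T1 \<subseteq> hom X X'"
  proof (rule image_subsetI)
    fix y assume y: "y \<in> cob A"
    show "?R' () y \<odot> ?L y () \<in> hom X X'" using comp_in[OF X _ X' L_in[OF X A S y] R_in[OF X' A S' y]] A y by simp
  qed
  have T2: "?T2 \<subseteq> hom X' X"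
  proof (rule image_subsetI)
    fix y assume y: "y \<in> cob A"
    show "?R () y \<odot> ?L' y () \<in> hom X' X" using comp_in[OF X' _ X L_in[OF X' A S' y] R_in[OF X A S y]] A y by simp
  qed
  have T: "?T \<subseteq> hom X X'"
  proof (rule image_subsetI)
    fix y assume y: "y \<in> cob A"
    show "iv (\<phi>' y ()) \<odot> \<phi> y () \<in> hom X X'" using comp_in[OF X _ X' sd(1)[OF y], of "iv (\<phi>' y ())"] sd'(1)[OF y] A y X' by simp
  qed
  have T': "?T \<subseteq> hom X' X' \<Longrightarrow> True" by simp
  have iT2: "iv (sp X' X ?T2) = sp X X' (iv ` ?T2)" by (rule inv_sup[OF X' X T2])
  have iT2s: "iv ` ?T2 \<subseteq> hom X X'" using T2 X X' by auto
  define h where "h = mt X X' (sp X X' ?T1) (iv (sp X' X ?T2))"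
  have hin: "h \<in> hom X X'" using X X' by (simp add: h_def)
  have ge: "leq X X' (sp X X' ?T) h"
    unfolding h_def
  proof (rule leq_meet_gr)
    show "leq X X' (sp X X' ?T) (sp X X' ?T1)"
    proof (rule leq_sup_mono[OF X X' T T1])
      fix s assume "s \<in> ?T"
      then obtain y where y: "y \<in> cob A" and s: "s = iv (\<phi>' y ()) \<odot> \<phi> y ()" by auto
      have "s \<preceq> ?R' () y \<odot> ?L y ()"
        using leqD(1)[OF leq_mono2[OF iphi_le_R[OF X' A S' y] phi_le_L[OF X A S y]]] s by simp
      then show "\<exists>t\<in>?T1. s \<preceq> t" using y by blast
    qed
    show "leq X X' (sp X X' ?T) (iv (sp X' X ?T2))"
      unfolding iT2
    proof (rule leq_sup_mono[OF X X' T iT2s])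
      fix s assume "s \<in> ?T"
      then obtain y where y: "y \<in> cob A" and s: "s = iv (\<phi>' y ()) \<odot> \<phi> y ()" by auto
      have oy: "cty A y \<in> obj" using A y by simp
      have e: "iv (?R () y \<odot> ?L' y ()) = iv (?L' y ()) \<odot> iv (?R () y)"
        using inv_comp[OF X' oy X L_in[OF X' A S' y] R_in[OF X A S y]] .
      have r: "leq X (cty A y) (\<phi> y ()) (iv (?R () y))"
        using leq_inv[OF iphi_le_R[OF X A S y]] sd(1)[OF y] X oy by simp
      have "s \<preceq> iv (?R () y \<odot> ?L' y ())"
        using leqD(1)[OF leq_mono2[OF leq_inv[OF phi_le_L[OF X' A S' y]] r]] s e by simp
      then show "\<exists>t\<in>iv ` ?T2. s \<preceq> t" using y by blast
    qed
  qed
  have key: "leq X (cty A a) (\<phi>' a () \<odot> h) (\<phi> a ())" if a: "a \<in> cob A" for a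
  proof -
    have oa: "cty A a \<in> obj" using A a by simp
    have p': "\<phi>' a () \<in> hom X' (cty A a)" by (rule sd'(1)[OF a])
    have "leq X (cty A a) (\<phi>' a () \<odot> h) (mt X (cty A a) (?L a ()) (iv (?R () a)))"
    proof (rule leq_meet_gr)
      have "leq X (cty A a) (\<phi>' a () \<odot> h) (?L' a () \<odot> sp X X' ?T1)"
        unfolding h_def by (rule leq_mono2[OF phi_le_L[OF X' A S' a] leq_meet1[OF X X' sup_in[OF X X' T1]]])
      also have "leq X (cty A a) \<dots> (?L a ())"
      proof (rule leqI[OF X oa comp_in[OF X X' oa sup_in[OF X X' T1] L_in[OF X' A S' a]] L_in[OF X A S a]])
        show "?L' a () \<odot> sp X X' ?T1 \<preceq> ?L a ()"
        proof (rule comp_sup_le[OF X X' oa L_in[OF X' A S' a] T1 L_in[OF X A S a]])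
          fix s assume "s \<in> ?T1"
          then obtain b where b: "b \<in> cob A" and s: "s = ?R' () b \<odot> ?L b ()" by auto
          have ob: "cty A b \<in> obj" using A b by simp
          have "?L' a () \<odot> s = (?L' a () \<odot> ?R' () b) \<odot> ?L b ()"
            using s assoc[OF X ob X' oa L_in[OF X A S b] R_in[OF X' A S' b] L_in[OF X' A S' a]] by simp
          also have "leq X (cty A a) \<dots> (chom A a b \<odot> ?L b ())"
            by (rule leq_mono_r[OF leqI[OF ob oa comp_in[OF ob X' oa R_in[OF X' A S' b] L_in[OF X' A S' a]] _ LR_counit[OF X' A S' b a]] X L_in[OF X A S b]])
              (use A a b in simp)
          also have "leq X (cty A a) \<dots> (?L a ())"
            by (rule leqI[OF X oa comp_in[OF X ob oa L_in[OF X A S b]] L_in[OF X A S a] L_act[OF X A S b a]]) (use A a b in simp)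
          finally show "?L' a () \<odot> s \<preceq> ?L a ()" by (rule leqD)
        qed
      qed
      finally show "leq X (cty A a) (\<phi>' a () \<odot> h) (?L a ())" .
      have p'i: "leq X' (cty A a) (\<phi>' a ()) (iv (?R' () a))"
        using leq_inv[OF iphi_le_R[OF X' A S' a]] p' X' oa by simp
      have "leq X (cty A a) (\<phi>' a () \<odot> h) (iv (?R' () a) \<odot> iv (sp X' X ?T2))"
        unfolding h_def by (rule leq_mono2[OF p'i leq_meet2[OF X X' inv_in[OF X' X sup_in[OF X' X T2]]]])
      also have "\<dots> = iv (sp X' X ?T2 \<odot> ?R' () a)"
        using inv_comp[OF oa X' X R_in[OF X' A S' a] sup_in[OF X' X T2]] by simp
      also have "leq X (cty A a) \<dots> (iv (?R () a))"
      proof (rule leq_inv[OF leqI[OF oa X comp_in[OF oa X' X R_in[OF X' A S' a] sup_in[OF X' X T2]] R_in[OF X A S a]]])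
        show "sp X' X ?T2 \<odot> ?R' () a \<preceq> ?R () a"
        proof (rule sup_comp_le[OF oa X' X R_in[OF X' A S' a] T2 R_in[OF X A S a]])
          fix s assume "s \<in> ?T2"
          then obtain b where b: "b \<in> cob A" and s: "s = ?R () b \<odot> ?L' b ()" by auto
          have ob: "cty A b \<in> obj" using A b by simp
          have "s \<odot> ?R' () a = ?R () b \<odot> (?L' b () \<odot> ?R' () a)"
            using s assoc[OF oa X' ob X R_in[OF X' A S' a] L_in[OF X' A S' b] R_in[OF X A S b]] by simp
          also have "leq (cty A a) X \<dots> (?R () b \<odot> chom A b a)"
            by (rule leq_mono_l[OF leqI[OF oa ob comp_in[OF oa X' ob R_in[OF X' A S' a] L_in[OF X' A S' b]] _ LR_counit[OF X' A S' a b]] X R_in[OF X A S b]])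
              (use A a b in simp)
          also have "leq (cty A a) X \<dots> (?R () a)"
            by (rule leqI[OF oa X comp_in[OF oa ob X _ R_in[OF X A S b]] R_in[OF X A S a] R_act[OF X A S b a]]) (use A a b in simp)
          finally show "s \<odot> ?R' () a \<preceq> ?R () a" by (rule leqD)
        qed
      qed
      finally show "leq X (cty A a) (\<phi>' a () \<odot> h) (iv (?R () a))" .
    qed
    then show ?thesis using P2pt[OF X A S a] by simp
  qed
  have T3: "(\<lambda>a. iv (\<phi>' a ()) \<odot> \<phi>' a ()) ` cob A \<subseteq> hom X' X'"
  proof (rule image_subsetI)
    fix a assume a: "a \<in> cob A"
    then show "iv (\<phi>' a ()) \<odot> \<phi>' a () \<in> hom X' X'"
      using comp_in[OF X' _ X' sd'(1)[OF a], of "iv (\<phi>' a ())"] A X' sd'(1)[OF a] by simp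
  qed
  have "h = one X' \<odot> h" using hin X X' by simp
  also have "leq X X' \<dots> (sp X' X' ((\<lambda>a. iv (\<phi>' a ()) \<odot> \<phi>' a ()) ` cob A) \<odot> h)"
    by (rule leq_mono_r[OF leqI[OF X' X' id_in[OF X'] sup_in[OF X' X' T3] sd'(4)] X hin])
  also have "leq X X' \<dots> (sp X X' ?T)"
  proof (rule leqI[OF X X' comp_in[OF X X' X' hin sup_in[OF X' X' T3]] sup_in[OF X X' T]])
    show "sp X' X' ((\<lambda>a. iv (\<phi>' a ()) \<odot> \<phi>' a ()) ` cob A) \<odot> h \<preceq> sp X X' ?T"
    proof (rule sup_comp_le[OF X X' X' hin T3 sup_in[OF X X' T]])
      fix s assume "s \<in> (\<lambda>a. iv (\<phi>' a ()) \<odot> \<phi>' a ()) ` cob A"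
      then obtain a where a: "a \<in> cob A" and s: "s = iv (\<phi>' a ()) \<odot> \<phi>' a ()" by auto
      have oa: "cty A a \<in> obj" using A a by simp
      have i: "iv (\<phi>' a ()) \<in> hom (cty A a) X'" using sd'(1)[OF a] oa X' by simp
      have "s \<odot> h = iv (\<phi>' a ()) \<odot> (\<phi>' a () \<odot> h)"
        using s assoc[OF X X' oa X' hin sd'(1)[OF a] i] by simp
      also have "leq X X' \<dots> (iv (\<phi>' a ()) \<odot> \<phi> a ())"
        by (rule leq_mono_l[OF key[OF a] X' i])
      also have "leq X X' \<dots> (sp X X' ?T)"
        by (rule leq_sup_ub[OF X X' T]) (use a in auto)
      finally show "s \<odot> h \<preceq> sp X X' ?T" by (rule leqD)
    qed
  qed
  finally have le: "leq X X' h (sp X X' ?T)" .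
  show ?thesis using leq_antisym[OF le ge] unfolding h_def .
qed

end

context iq begin

lemma cob_cc: "p \<in> cob (cc Q A) \<longleftrightarrow> fst p \<in> obj \<and> ladj Q (star Q (fst p)) A (snd p)"
  by (cases p) (simp add: cc_def)
lemma cob_sc: "p \<in> cob (sc Q B) \<longleftrightarrow> p \<in> cob (cc Q B) \<and> sym_ladj Q (star Q (fst p)) B (snd p)"
  by (simp add: sc_def)
lemma Linv_eq: "Linv Q A (X, \<psi>) = (X, dsym Q (star Q X) A \<psi>)"
  by (simp add: Linv_def)
lemma chom_cc: "chom (cc Q A) (X', \<psi>') (X, \<psi>) = sp X X' ((\<lambda>y. radj Q (star Q X') A \<psi>' () y \<odot> \<psi> y ()) ` cob A)"
  by (simp add: cc_def dcomp_def)
lemma sym_ladj_ladj: "sym_ladj Q A B \<Phi> \<Longrightarrow> ladj Q A B \<Phi>"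
  unfolding sym_ladj_def ladj_def by blast

lemma one_two: assumes A: "qcategory Q A"
  shows "(\<forall>\<psi>\<in>cob (symz Q (cc Q A)). \<exists>\<phi>\<in>cob (sc Q (symz Q A)). Lfun Q A \<phi> = \<psi>)
       \<longleftrightarrow> (\<forall>X\<in>obj. \<forall>\<psi>. ladj Q (star Q X) A \<psi> \<longrightarrow> sym_ladj Q (star Q X) (symz Q A) (dsym Q (star Q X) A \<psi>))"
proof
  assume H1: "\<forall>\<psi>\<in>cob (symz Q (cc Q A)). \<exists>\<phi>\<in>cob (sc Q (symz Q A)). Lfun Q A \<phi> = \<psi>"
  show "\<forall>X\<in>obj. \<forall>\<psi>. ladj Q (star Q X) A \<psi> \<longrightarrow> sym_ladj Q (star Q X) (symz Q A) (dsym Q (star Q X) A \<psi>)"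
  proof (intro ballI allI impI)
    fix X \<psi> assume X: "X \<in> obj" and L: "ladj Q (star Q X) A \<psi>"
    have "(X, \<psi>) \<in> cob (symz Q (cc Q A))" using X L by (simp add: cob_cc)
    then obtain \<phi> where p: "\<phi> \<in> cob (sc Q (symz Q A))" and e: "Lfun Q A \<phi> = (X, \<psi>)" using H1 by blast
    obtain X0 \<phi>0 where ph: "\<phi> = (X0, \<phi>0)" by (cases \<phi>)
    have X0: "X0 = X" and e2: "Lp A X \<phi>0 = \<psi>" using e unfolding ph Lfun_eq by auto
    have S: "sym_ladj Q (star Q X) (symz Q A) \<phi>0" using p ph X0 by (simp add: cob_sc)
    have "dsym Q (star Q X) A \<psi> = \<phi>0" using P2[OF X A S] e2 by simp
    then show "sym_ladj Q (star Q X) (symz Q A) (dsym Q (star Q X) A \<psi>)" using S by simp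
  qed
next
  assume H2: "\<forall>X\<in>obj. \<forall>\<psi>. ladj Q (star Q X) A \<psi> \<longrightarrow> sym_ladj Q (star Q X) (symz Q A) (dsym Q (star Q X) A \<psi>)"
  show "\<forall>\<psi>\<in>cob (symz Q (cc Q A)). \<exists>\<phi>\<in>cob (sc Q (symz Q A)). Lfun Q A \<phi> = \<psi>"
  proof
    fix p assume "p \<in> cob (symz Q (cc Q A))"
    then obtain X \<psi> where p: "p = (X, \<psi>)" and X: "X \<in> obj" and L: "ladj Q (star Q X) A \<psi>"
      by (cases p) (auto simp: cob_cc)
    have S: "sym_ladj Q (star Q X) (symz Q A) (dsym Q (star Q X) A \<psi>)" using H2 X L by blast
    have adj: "is_adj Q (star Q X) A \<psi> (radj Q (star Q X) A \<psi>)"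
      by (rule radj_adj[OF star_cat[OF X A S] A L])
    have "(X, dsym Q (star Q X) A \<psi>) \<in> cob (sc Q (symz Q A))"
      using X S sym_ladj_ladj[OF S] by (simp add: cob_sc cob_cc)
    moreover have "Lfun Q A (X, dsym Q (star Q X) A \<psi>) = p"
      unfolding Lfun_eq using P3[OF X A adj S] p by simp
    ultimately show "\<exists>\<phi>\<in>cob (sc Q (symz Q A)). Lfun Q A \<phi> = p" by blast
  qed
qed


lemma iso_chom: assumes A: "qcategory Q A"
  and p: "p \<in> cob (sc Q (symz Q A))" and p': "p' \<in> cob (sc Q (symz Q A))"
  shows "chom (symz Q (cc Q A)) (Lfun Q A p') (Lfun Q A p) = chom (sc Q (symz Q A)) p' p"
proof -
  obtain X \<phi> where pp: "p = (X, \<phi>)" by (cases p)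
  obtain X' \<phi>' where pp': "p' = (X', \<phi>')" by (cases p')
  have X: "X \<in> obj" and S: "sym_ladj Q (star Q X) (symz Q A) \<phi>" using p pp by (auto simp: cob_sc cob_cc)
  have X': "X' \<in> obj" and S': "sym_ladj Q (star Q X') (symz Q A) \<phi>'" using p' pp' by (auto simp: cob_sc cob_cc)
  have c1: "(X, Lp A X \<phi>) \<in> cob (cc Q A)" using X P1[OF X A S] by (auto simp: cob_cc ladj_def)
  have c2: "(X', Lp A X' \<phi>') \<in> cob (cc Q A)" using X' P1[OF X' A S'] by (auto simp: cob_cc ladj_def)
  have r1: "radj Q (star Q X) A (Lp A X \<phi>) = Rp A X \<phi>" by (rule radj_eq[OF star_cat[OF X A S] A P1[OF X A S]])
  have r2: "radj Q (star Q X') A (Lp A X' \<phi>') = Rp A X' \<phi>'" by (rule radj_eq[OF star_cat[OF X' A S'] A P1[OF X' A S']])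
  have r3: "radj Q (star Q X') (symz Q A) \<phi>' = dual Q (star Q X') (symz Q A) \<phi>'"
    by (rule radj_eq[OF star_cat[OF X' A S'] symz_cat[OF A] S'[unfolded sym_ladj_def]])
  have "chom (symz Q (cc Q A)) (Lfun Q A p') (Lfun Q A p) =
      mt X X' (sp X X' ((\<lambda>y. Rp A X' \<phi>' () y \<odot> Lp A X \<phi> y ()) ` cob A))
           (iv (sp X' X ((\<lambda>y. Rp A X \<phi> () y \<odot> Lp A X' \<phi>' y ()) ` cob A)))"
    unfolding pp pp' Lfun_eq symz_hom[OF c1 c2] chom_cc r1 r2 by (simp add: cc_def)
  also have "\<dots> = sp X X' ((\<lambda>y. iv (\<phi>' y ()) \<odot> \<phi> y ()) ` cob A)" by (rule P5[OF X X' A S S'])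
  also have "\<dots> = chom (sc Q (symz Q A)) p' p"
    unfolding pp pp' sc_def by (simp add: chom_cc r3 dual_def)
  finally show ?thesis .
qed

lemma iso: assumes A: "qcategory Q A"
  and H2: "\<forall>X\<in>obj. \<forall>\<psi>. ladj Q (star Q X) A \<psi> \<longrightarrow> sym_ladj Q (star Q X) (symz Q A) (dsym Q (star Q X) A \<psi>)"
  shows "(\<forall>\<phi>\<in>cob (sc Q (symz Q A)). Lfun Q A \<phi> \<in> cob (symz Q (cc Q A)) \<and> Linv Q A (Lfun Q A \<phi>) = \<phi>)
   \<and> (\<forall>\<psi>\<in>cob (symz Q (cc Q A)). Linv Q A \<psi> \<in> cob (sc Q (symz Q A)) \<and> Lfun Q A (Linv Q A \<psi>) = \<psi>)
   \<and> (\<forall>\<phi>\<in>cob (sc Q (symz Q A)). \<forall>\<phi>'\<in>cob (sc Q (symz Q A)).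
        chom (symz Q (cc Q A)) (Lfun Q A \<phi>') (Lfun Q A \<phi>) = chom (sc Q (symz Q A)) \<phi>' \<phi>)"
proof (intro conjI ballI)
  fix p assume p: "p \<in> cob (sc Q (symz Q A))"
  obtain X \<phi> where pp: "p = (X, \<phi>)" by (cases p)
  have X: "X \<in> obj" and S: "sym_ladj Q (star Q X) (symz Q A) \<phi>" using p pp by (auto simp: cob_sc cob_cc)
  show "Lfun Q A p \<in> cob (symz Q (cc Q A))" unfolding pp Lfun_eq using X P1[OF X A S] by (auto simp: cob_cc ladj_def)
  show "Linv Q A (Lfun Q A p) = p" unfolding pp Lfun_eq Linv_eq using P2[OF X A S] by simp
next
  fix q assume q: "q \<in> cob (symz Q (cc Q A))"
  then obtain X \<psi> where qq: "q = (X, \<psi>)" and X: "X \<in> obj" and L: "ladj Q (star Q X) A \<psi>"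
    by (cases q) (auto simp: cob_cc)
  have S: "sym_ladj Q (star Q X) (symz Q A) (dsym Q (star Q X) A \<psi>)" using H2 X L by blast
  have adj: "is_adj Q (star Q X) A \<psi> (radj Q (star Q X) A \<psi>)"
    by (rule radj_adj[OF star_cat[OF X A S] A L])
  show "Linv Q A q \<in> cob (sc Q (symz Q A))"
    unfolding qq Linv_eq using X S sym_ladj_ladj[OF S] by (simp add: cob_sc cob_cc)
  show "Lfun Q A (Linv Q A q) = q"
    unfolding qq Linv_eq Lfun_eq using P3[OF X A adj S] by simp
next
  fix p p' assume "p \<in> cob (sc Q (symz Q A))" "p' \<in> cob (sc Q (symz Q A))"
  then show "chom (symz Q (cc Q A)) (Lfun Q A p') (Lfun Q A p) = chom (sc Q (symz Q A)) p' p"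
    by (rule iso_chom[OF A])
qed

end

theorem proposition3p6:
  fixes Q :: "('o, 'm) quantaloid" and A :: "('a, 'o, 'm) qcat"
  assumes "involutive_quantaloid Q" and "qcategory Q A"
  shows
   "((\<forall>\<psi>\<in>cob (symz Q (cc Q A)). \<exists>\<phi>\<in>cob (sc Q (symz Q A)). Lfun Q A \<phi> = \<psi>)
       \<longleftrightarrow>
     (\<forall>X\<in>qobj Q. \<forall>\<psi>. ladj Q (star Q X) A \<psi> \<longrightarrow>
        sym_ladj Q (star Q X) (symz Q A) (dsym Q (star Q X) A \<psi>)))
  \<and> ((\<forall>X\<in>qobj Q. \<forall>\<psi>. ladj Q (star Q X) A \<psi> \<longrightarrow>
        sym_ladj Q (star Q X) (symz Q A) (dsym Q (star Q X) A \<psi>))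
       \<longleftrightarrow>
     (\<forall>XX :: ('x, 'o, 'm) qcat. qcategory Q XX \<longrightarrow>
        (\<forall>\<Psi>. ladj Q XX A \<Psi> \<longrightarrow> sym_ladj Q (symz Q XX) (symz Q A) (dsym Q XX A \<Psi>))))
  \<and> ((\<forall>\<psi>\<in>cob (symz Q (cc Q A)). \<exists>\<phi>\<in>cob (sc Q (symz Q A)). Lfun Q A \<phi> = \<psi>)
       \<longrightarrow>
     (\<forall>\<phi>\<in>cob (sc Q (symz Q A)). Lfun Q A \<phi> \<in> cob (symz Q (cc Q A)) \<and> Linv Q A (Lfun Q A \<phi>) = \<phi>)
   \<and> (\<forall>\<psi>\<in>cob (symz Q (cc Q A)). Linv Q A \<psi> \<in> cob (sc Q (symz Q A)) \<and> Lfun Q A (Linv Q A \<psi>) = \<psi>)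
   \<and> (\<forall>\<phi>\<in>cob (sc Q (symz Q A)). \<forall>\<phi>'\<in>cob (sc Q (symz Q A)).
        chom (symz Q (cc Q A)) (Lfun Q A \<phi>') (Lfun Q A \<phi>) = chom (sc Q (symz Q A)) \<phi>' \<phi>))"
proof -
  interpret iq Q by unfold_locales (rule assms(1))
  note A = assms(2)
  note e12 = one_two[OF A]
  note e23 = two_three[OF A, where 'x = 'x]
  note I = iso[OF A]
  show ?thesis using e12 e23 I by blast
qed


end
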